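(* Assume (A1). For all $x,y\in J$, $$\mathcal{D}_0(y,x)=\min\big(\mathcal{D}_{\mathrm{straight}}(y,x),\,\mathcal{D}_{\mathrm{junction}}(y,x)\big).$$
   Context: Junction: fix an integer $N\ge1$ and $N$ distinct unit vectors $e_1,\dots,e_N\in\mathbb{R}^2$. Set $J_i=[0,\infty)e_i$, $J_i^*=J_i\setminus\{0\}$, $J=\bigcup_{i=1}^NJ_i$, $I_N=\{1,\dots,N\}$. Each $x\in J_i$ is written $x=x_ie_i$, $x_i\ge0$. (A1): there is $\gamma>0$ with $L_i\in C^2(\mathbb{R})$, $L_i''\ge\gamma$ for each $i\in I_N$. $L_0(p)=\min_jL_j(p)$. Reduced minimal action: $A(x)=\mathbb{R}e_i$ if $x\in J_i^*$, $A(0)=\bigcup_i[0,\infty)e_i$; for $P=pe_i\in A(x)$, $L(x,P)=L_i(p)$ if $x\in J_i^*$, $L(0,P)=L_0(p)$. $\mathcal{A}(0,y;1,x)$ is the set of $X\in W^{1,1}([0,1];\mathbb{R}^2)$ with $X(\tau)\in J$, $\dot X(\tau)\in A(X(\tau))$ a.e., $X(0)=y$, $X(1)=x$; $\mathcal{D}_0(y,x)=\inf_{X\in\mathcal{A}(0,y;1,x)}\int_0^1L(X,\dot X)\,d\tau$. Auxiliary functions: $\mathcal{D}_{\mathrm{straight}}(y,x)=L_i(x_i-y_i)$ if $(y,x)\in J_i\times J_i\setminus\{(0,0)\}$ for some $i$; $=L_0(0)$ if $y=x=0$; $=+\infty$ otherwise. For $\tau\in[0,1]$: $\mathcal{E}_1(\tau,y)=\tau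 L_j(-y_j/\tau)-\tau L_0(0)$ if $y=y_je_j\ne0$ and $\tau\ne0$; $\mathcal{E}_1(\tau,0)=0$; $\mathcal{E}_1(0,y)=+\infty$ if $y\ne0$. $\mathcal{E}_2(\tau,x)=(1-\tau)L_i(x_i/(1-\tau))+\tau L_0(0)$ if $x=x_ie_i\ne0$ and $\tau\ne1$; $\mathcal{E}_2(\tau,0)=L_0(0)$; $\mathcal{E}_2(1,x)=+\infty$ if $x\ne0$. $\mathcal{D}_{\mathrm{junction}}(y,x)=\inf_{0\le\tau_1\le\tau_2\le1}\{\mathcal{E}_1(\tau_1,y)+\mathcal{E}_2(\tau_2,x)\}$. *)

theory Defs
  imports "HOL-Analysis.Analysis"
begin

definition ray :: "(nat \<Rightarrow> real^2) \<Rightarrow> nat \<Rightarrow> (real^2) set" where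
  "ray e i = {t *\<^sub>R e i | t. t \<ge> 0}"

definition junction :: "nat \<Rightarrow> (nat \<Rightarrow> real^2) \<Rightarrow> (real^2) set" where
  "junction N e = (\<Union>i\<in>{1..N}. ray e i)"

text \<open>Index of the branch containing a point (meaningful for nonzero points of J).\<close>
definition branch_idx :: "nat \<Rightarrow> (nat \<Rightarrow> real^2) \<Rightarrow> real^2 \<Rightarrow> nat" where
  "branch_idx N e x = (SOME i. i \<in> {1..N} \<and> x \<in> ray e i)"

definition L0 :: "nat \<Rightarrow> (nat \<Rightarrow> real \<Rightarrow> real) \<Rightarrow> real \<Rightarrow> real" where
  "L0 N L p = Min ((\<lambda>i. L i p) ` {1..N})"

definition adm_dir :: "nat \<Rightarrow> (nat \<Rightarrow> real^2) \<Rightarrow> real^2 \<Rightarrow> (real^2) set" where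
  "adm_dir N e x = (if x = 0 then junction N e
     else {t *\<^sub>R e (branch_idx N e x) | t. True})"

text \<open>Lagrangian L(x,P) for P in A(x): at x in J_i^*, P = p e_i and L = L_i(p);
  at 0, P = p e_j with p \<ge> 0, so p = norm P and L = L_0(p).\<close>
definition Lag :: "nat \<Rightarrow> (nat \<Rightarrow> real^2) \<Rightarrow> (nat \<Rightarrow> real \<Rightarrow> real) \<Rightarrow> real^2 \<Rightarrow> real^2 \<Rightarrow> real" where
  "Lag N e L x P = (if x = 0 then L0 N L (norm P)
     else L (branch_idx N e x) (P \<bullet> e (branch_idx N e x)))"

text \<open>Action of a path; the integrand is bounded below, so non-integrability means +oo.\<close>
definition path_cost :: "nat \<Rightarrow> (nat \<Rightarrow> real^2) \<Rightarrow> (nat \<Rightarrow> real \<Rightarrow> real)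
    \<Rightarrow> (real \<Rightarrow> real^2) \<Rightarrow> (real \<Rightarrow> real^2) \<Rightarrow> ereal" where
  "path_cost N e L X g =
     (if set_integrable lborel {0..1} (\<lambda>\<tau>. Lag N e L (X \<tau>) (g \<tau>))
      then ereal (set_lebesgue_integral lborel {0..1} (\<lambda>\<tau>. Lag N e L (X \<tau>) (g \<tau>)))
      else \<infinity>)"

text \<open>X in W^{1,1}([0,1]) with (weak) derivative g in L^1, i.e. X(t) = X(0) + int_0^t g,
  X(0) = y, X(1) = x, X(tau) in J and g(tau) in A(X(tau)) for a.e. tau.\<close>
definition admissible :: "nat \<Rightarrow> (nat \<Rightarrow> real^2) \<Rightarrow> real^2 \<Rightarrow> real^2
    \<Rightarrow> (real \<Rightarrow> real^2) \<Rightarrow> (real \<Rightarrow> real^2) \<Rightarrow> bool" where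
  "admissible N e y x X g \<longleftrightarrow>
     set_integrable lborel {0..1} g \<and>
     (\<forall>t\<in>{0..1}. X t = X 0 + set_lebesgue_integral lborel {0..t} g) \<and>
     X 0 = y \<and> X 1 = x \<and>
     (AE \<tau> in lborel. \<tau> \<in> {0..1} \<longrightarrow> X \<tau> \<in> junction N e \<and> g \<tau> \<in> adm_dir N e (X \<tau>))"

definition D0 :: "nat \<Rightarrow> (nat \<Rightarrow> real^2) \<Rightarrow> (nat \<Rightarrow> real \<Rightarrow> real) \<Rightarrow> real^2 \<Rightarrow> real^2 \<Rightarrow> ereal" where
  "D0 N e L y x = Inf {path_cost N e L X g | X g. admissible N e y x X g}"

definition Dstraight :: "nat \<Rightarrow> (nat \<Rightarrow> real^2) \<Rightarrow> (nat \<Rightarrow> real \<Rightarrow> real) \<Rightarrow> real^2 \<Rightarrow> real^2 \<Rightarrow> ereal" where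
  "Dstraight N e L y x =
     (if y = 0 \<and> x = 0 then ereal (L0 N L 0)
      else if \<exists>i\<in>{1..N}. y \<in> ray e i \<and> x \<in> ray e i then
        (let i = (SOME i. i \<in> {1..N} \<and> y \<in> ray e i \<and> x \<in> ray e i)
         in ereal (L i (x \<bullet> e i - y \<bullet> e i)))
      else \<infinity>)"

definition E1 :: "nat \<Rightarrow> (nat \<Rightarrow> real^2) \<Rightarrow> (nat \<Rightarrow> real \<Rightarrow> real) \<Rightarrow> real \<Rightarrow> real^2 \<Rightarrow> ereal" where
  "E1 N e L \<tau> y =
     (if y = 0 then 0
      else if \<tau> = 0 then \<infinity>
      else (let j = branch_idx N e y in
            ereal (\<tau> * L j (- (y \<bullet> e j) / \<tau>) - \<tau> * L0 N L 0)))"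

definition E2 :: "nat \<Rightarrow> (nat \<Rightarrow> real^2) \<Rightarrow> (nat \<Rightarrow> real \<Rightarrow> real) \<Rightarrow> real \<Rightarrow> real^2 \<Rightarrow> ereal" where
  "E2 N e L \<tau> x =
     (if x = 0 then ereal (L0 N L 0)
      else if \<tau> = 1 then \<infinity>
      else (let i = branch_idx N e x in
            ereal ((1 - \<tau>) * L i ((x \<bullet> e i) / (1 - \<tau>)) + \<tau> * L0 N L 0)))"

definition Djunction :: "nat \<Rightarrow> (nat \<Rightarrow> real^2) \<Rightarrow> (nat \<Rightarrow> real \<Rightarrow> real) \<Rightarrow> real^2 \<Rightarrow> real^2 \<Rightarrow> ereal" where
  "Djunction N e L y x =
     Inf {E1 N e L \<tau>1 y + E2 N e L \<tau>2 x | \<tau>1 \<tau>2. 0 \<le> \<tau>1 \<and> \<tau>1 \<le> \<tau>2 \<and> \<tau>2 \<le> 1}"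

end

theory Submission
  imports Defs
begin


lemma ray_char:
  assumes "norm (u::real^2) = 1"
  shows "x \<in> {t *\<^sub>R u | t. t \<ge> 0} \<longleftrightarrow> x = (x \<bullet> u) *\<^sub>R u \<and> x \<bullet> u \<ge> 0"
proof
  assume "x \<in> {t *\<^sub>R u | t. t \<ge> 0}"
  then obtain t where t: "t \<ge> 0" "x = t *\<^sub>R u" by auto
  have "u \<bullet> u = 1" using assms by (simp add: dot_square_norm)
  then have "x \<bullet> u = t" using t by simp
  then show "x = (x \<bullet> u) *\<^sub>R u \<and> x \<bullet> u \<ge> 0" using t by simp
next
  assume "x = (x \<bullet> u) *\<^sub>R u \<and> x \<bullet> u \<ge> 0"
  then show "x \<in> {t *\<^sub>R u | t. t \<ge> 0}" by blast
qed

lemma closed_ray: 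
  assumes "norm (u::real^2) = 1"
  shows "closed {t *\<^sub>R u | t. t \<ge> 0}"
proof -
  have "{t *\<^sub>R u | t. t \<ge> 0} = {x. x = (x \<bullet> u) *\<^sub>R u \<and> x \<bullet> u \<ge> 0}"
    using ray_char[OF assms] by blast
  also have "closed \<dots>"
    by (intro closed_Collect_conj closed_Collect_eq closed_Collect_le continuous_intros)
  finally show ?thesis .
qed

lemma rays_disjoint:
  assumes "norm (u::real^2) = 1" "norm v = 1" "u \<noteq> v"
    and "x \<in> {t *\<^sub>R u | t. t \<ge> 0}" "x \<in> {t *\<^sub>R v | t. t \<ge> 0}"
  shows "x = 0"
proof (rule ccontr)
  assume nz: "x \<noteq> 0"
  obtain t where t: "t \<ge> 0" "x = t *\<^sub>R u" using assms(4) by auto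
  obtain s where s: "s \<ge> 0" "x = s *\<^sub>R v" using assms(5) by auto
  note ts = t s
  have "norm x = t" using t(1) assms(1) by (simp add: t(2))
  moreover have "norm x = s" using s(1) assms(2) by (simp add: s(2))
  ultimately have "t = s" "t > 0" using nz ts by auto
  then have "u = v" using ts by (metis scaleR_cancel_left less_irrefl)
  then show False using assms by simp
qed

lemma support_line:
  fixes f d :: "real \<Rightarrow> real"
  assumes der: "\<And>p. (f has_real_derivative d p) (at p)"
    and mono: "\<And>a b. a \<le> b \<Longrightarrow> d a \<le> d b"
  shows "f p \<ge> f q + d q * (p - q)"
proof (cases "p = q")
  case True then show ?thesis by simp
next
  case False
  show ?thesis
  proof (cases "q < p")
    case True
    obtain z where z: "q < z" "z < p" "f p - f q = (p - q) * d z"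
      using MVT2[OF True] der by metis
    have "d q * (p - q) \<le> d z * (p - q)" using mono[of q z] z True
      by (intro mult_right_mono) auto
    then show ?thesis using z by (simp add: algebra_simps)
  next
    case False
    then have pq: "p < q" using \<open>p \<noteq> q\<close> by simp
    obtain z where z: "p < z" "z < q" "f q - f p = (q - p) * d z"
      using MVT2[OF pq] der by metis
    have "d z * (q - p) \<le> d q * (q - p)" using mono[of z q] z pq
      by (intro mult_right_mono) auto
    then show ?thesis using z by (simp add: algebra_simps)
  qed
qed

lemma deriv_mono_from_second:
  fixes d d2 :: "real \<Rightarrow> real"
  assumes "\<And>p. (d has_real_derivative d2 p) (at p)" "\<And>p. d2 p \<ge> \<gamma>" "\<gamma> > 0"
  shows "a \<le> b \<Longrightarrow> d a \<le> d b"
proof -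
  assume ab: "a \<le> b"
  show "d a \<le> d b"
    using DERIV_nonneg_imp_nondecreasing[OF ab, of d] assms
    by (meson less_le_not_le order_less_le_trans)
qed


lemma integrable_mult_ind:
  fixes h :: "real \<Rightarrow> real"
  assumes "integrable lborel h" "A \<in> sets borel"
  shows "integrable lborel (\<lambda>x. h x * indicator A x)"
  using integrable_mult_indicator[of A lborel h] assms by (simp add: mult.commute)

lemma ae_zero_Ioi:
  fixes f :: "real \<Rightarrow> real"
  assumes int: "integrable lborel f"
    and z: "\<And>x. set_lebesgue_integral lborel {x<..} f = 0"
  shows "AE x in lborel. f x = 0"
proof -
  have fm[measurable]: "f \<in> borel_measurable lborel" using int by auto
  have pos: "\<And>A. A \<in> sets borel \<Longrightarrow> (\<integral>\<^sup>+ t. ennreal (f t) * indicator A t \<partial>lborel)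
      = ennreal (\<integral> t. max 0 (f t) * indicator A t \<partial>lborel)"
  proof -
    fix A :: "real set" assume A[measurable]: "A \<in> sets borel"
    have "(\<integral>\<^sup>+ t. ennreal (f t) * indicator A t \<partial>lborel) = (\<integral>\<^sup>+ t. ennreal (max 0 (f t) * indicator A t) \<partial>lborel)"
      by (intro nn_integral_cong) (auto simp: indicator_def max_def ennreal_neg)
    also have "\<dots> = ennreal (\<integral> t. max 0 (f t) * indicator A t \<partial>lborel)"
      by (intro nn_integral_eq_integral integrable_mult_ind A integrable_max int) auto
    finally show "?thesis A" .
  qed
  have neg: "\<And>A. A \<in> sets borel \<Longrightarrow> (\<integral>\<^sup>+ t. ennreal (- f t) * indicator A t \<partial>lborel)
      = ennreal (\<integral> t. max 0 (- f t) * indicator A t \<partial>lborel)"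
  proof -
    fix A :: "real set" assume A[measurable]: "A \<in> sets borel"
    have "(\<integral>\<^sup>+ t. ennreal (- f t) * indicator A t \<partial>lborel) = (\<integral>\<^sup>+ t. ennreal (max 0 (- f t) * indicator A t) \<partial>lborel)"
      by (intro nn_integral_cong) (auto simp: indicator_def max_def ennreal_neg)
    also have "\<dots> = ennreal (\<integral> t. max 0 (- f t) * indicator A t \<partial>lborel)"
      by (intro nn_integral_eq_integral integrable_mult_ind A integrable_max int integrable_minus) auto
    finally show "?thesis A" .
  qed
  let ?M = "density lborel (\<lambda>x. ennreal (f x))"
  let ?N = "density lborel (\<lambda>x. ennreal (- f x))"
  have "?M = ?N"
  proof (rule measure_eqI_lessThan)
    show "sets ?M = sets borel" "sets ?N = sets borel" by auto
    fix x :: real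
    have "emeasure ?M {x<..} = ennreal (\<integral> t. max 0 (f t) * indicator {x<..} t \<partial>lborel)"
      by (simp add: emeasure_density pos)
    then show "emeasure ?M {x<..} < \<infinity>" by simp
    have "(\<integral> t. f t * indicator {x<..} t \<partial>lborel) = 0"
      using z[of x] by (simp add: set_lebesgue_integral_def mult.commute)
    moreover have "(\<integral> t. f t * indicator {x<..} t \<partial>lborel) =
       (\<integral> t. max 0 (f t) * indicator {x<..} t \<partial>lborel) - (\<integral> t. max 0 (- f t) * indicator {x<..} t \<partial>lborel)"
    proof -
      have "(\<integral> t. f t * indicator {x<..} t \<partial>lborel) =
         (\<integral> t. max 0 (f t) * indicator {x<..} t - max 0 (- f t) * indicator {x<..} t \<partial>lborel)"
        by (intro Bochner_Integration.integral_cong) (auto simp: max_def)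
      also have "\<dots> = (\<integral> t. max 0 (f t) * indicator {x<..} t \<partial>lborel) - (\<integral> t. max 0 (- f t) * indicator {x<..} t \<partial>lborel)"
        by (intro Bochner_Integration.integral_diff integrable_mult_ind integrable_max int integrable_minus) auto
      finally show ?thesis .
    qed
    ultimately show "emeasure ?M {x<..} = emeasure ?N {x<..}"
      by (simp add: emeasure_density pos neg)
  qed
  then have "AE x in lborel. ennreal (f x) = ennreal (- f x)"
    by (intro sigma_finite_measure.density_unique sigma_finite_lborel) auto
  then show ?thesis
    proof eventually_elim
    fix x assume h: "ennreal (f x) = ennreal (- f x)"
    show "f x = 0"
    proof (cases "f x \<ge> 0")
      case True
      then have "ennreal (- f x) = 0" by (simp add: ennreal_neg)
      then show ?thesis using h True by simp
    next
      case False
      then have "ennreal (f x) = 0" by (simp add: ennreal_neg)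
      then show ?thesis using h False by simp
    qed
  qed
qed


lemma open_components_enum:
  fixes U :: "real set" assumes opn: "open U"
  obtains A :: "nat \<Rightarrow> real set" where "disjoint_family A" "(\<Union>n. A n) = U"
    "\<And>n. A n = {} \<or> A n \<in> components U"
proof -
  define r where "r = from_nat_into (\<rat> :: real set)"
  have rng: "range r = \<rat>" unfolding r_def
    by (intro range_from_nat_into) (auto simp: countable_rat)
  define A where "A n = (if r n \<in> U \<and> (\<forall>m<n. r m \<notin> connected_component_set U (r n))
     then connected_component_set U (r n) else {})" for n
  have "disjoint_family A"
  proof (unfold disjoint_family_on_def, intro ballI impI)
    fix n m :: nat assume "n \<in> UNIV" "m \<in> UNIV" "n \<noteq> m"
    show "A n \<inter> A m = {}"
    proof (rule ccontr)
      assume "A n \<inter> A m \<noteq> {}"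
      then obtain z where z: "z \<in> A n" "z \<in> A m" by blast
      then have cn: "r n \<in> U" "\<forall>k<n. r k \<notin> connected_component_set U (r n)" "z \<in> connected_component_set U (r n)"
        and cm: "r m \<in> U" "\<forall>k<m. r k \<notin> connected_component_set U (r m)" "z \<in> connected_component_set U (r m)"
        by (auto simp: A_def split: if_splits)
      have eq: "connected_component_set U (r n) = connected_component_set U (r m)"
        using cn(3) cm(3) by (metis connected_component_eq)
      show False
      proof (cases "m < n")
        case True
        then show ?thesis using cn(2) eq cm(1) by (metis connected_component_refl_eq mem_Collect_eq)
      next
        case False
        then have "n < m" using \<open>n \<noteq> m\<close> by simp
        then show ?thesis using cm(2) eq cn(1) by (metis connected_component_refl_eq mem_Collect_eq)
      qed
    qed
  qed
  moreover have "(\<Union>n. A n) = U"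
  proof
    show "(\<Union>n. A n) \<subseteq> U" by (auto simp: A_def connected_component_subset split: if_splits dest: connected_component_in)
  next
    show "U \<subseteq> (\<Union>n. A n)"
    proof
      fix t assume t: "t \<in> U"
      let ?C = "connected_component_set U t"
      have "open ?C" using opn by (rule open_connected_component)
      moreover have "t \<in> ?C" using t by simp
      ultimately obtain e where e: "e > 0" "ball t e \<subseteq> ?C" by (meson openE)
      obtain q where q: "q \<in> \<rat>" "t < q" "q < t + e" using Rats_dense_in_real[of t "t+e"] e by auto
      have "q \<in> ?C" using e q by (intro subsetD[OF e(2)]) (auto simp: dist_real_def)
      then have ex: "\<exists>n. r n \<in> ?C" using q rng by (metis rangeE)
      define n where "n = (LEAST n. r n \<in> ?C)"
      have rn: "r n \<in> ?C" unfolding n_def by (rule LeastI_ex[OF ex])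
      have lt: "\<And>m. m < n \<Longrightarrow> r m \<notin> ?C" unfolding n_def using not_less_Least by blast
      have Ceq: "connected_component_set U (r n) = ?C" using rn by (metis connected_component_eq)
      have "r n \<in> U" using rn connected_component_subset by blast
      then have "A n = ?C" using lt Ceq by (auto simp: A_def)
      then show "t \<in> (\<Union>n. A n)" using t by auto
    qed
  qed
  moreover have "A n = {} \<or> A n \<in> components U" for n
    by (auto simp: A_def components_iff)
  ultimately show ?thesis using that by blast
qed


locale junc =
  fixes N :: nat and e :: "nat \<Rightarrow> real^2" and L :: "nat \<Rightarrow> real \<Rightarrow> real" and \<gamma> :: real
  assumes N1: "N \<ge> 1" and inj: "inj_on e {1..N}" and unit: "\<forall>i\<in>{1..N}. norm (e i) = 1"
    and gpos: "\<gamma> > 0"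
    and Lreg: "\<forall>i\<in>{1..N}. \<exists>L1 L2. continuous_on UNIV L2 \<and>
           (\<forall>p. (L i has_real_derivative L1 p) (at p) \<and>
                (L1 has_real_derivative L2 p) (at p) \<and> L2 p \<ge> \<gamma>)"
begin

lemma unit': "i \<in> {1..N} \<Longrightarrow> norm (e i) = 1" using unit by auto

lemma ray_mem: "i \<in> {1..N} \<Longrightarrow> x \<in> ray e i \<longleftrightarrow> x = (x \<bullet> e i) *\<^sub>R e i \<and> x \<bullet> e i \<ge> 0"
  unfolding ray_def using ray_char[OF unit'] by blast

lemma ray_closed: "i \<in> {1..N} \<Longrightarrow> closed (ray e i)"
  unfolding ray_def using closed_ray[OF unit'] by blast

lemma zero_ray[simp]: "0 \<in> ray e i"
  unfolding ray_def by force

lemma scale_ray: "i \<in> {1..N} \<Longrightarrow> t \<ge> 0 \<Longrightarrow> t *\<^sub>R e i \<in> ray e i"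
  unfolding ray_def by blast

lemma ee: "i \<in> {1..N} \<Longrightarrow> e i \<bullet> e i = 1"
  using unit' by (simp add: dot_square_norm)

lemma junction_closed: "closed (junction N e)"
  unfolding junction_def using ray_closed by (intro closed_UN) auto

lemma rays_meet: "i \<in> {1..N} \<Longrightarrow> k \<in> {1..N} \<Longrightarrow> i \<noteq> k \<Longrightarrow> x \<in> ray e i \<Longrightarrow> x \<in> ray e k \<Longrightarrow> x = 0"
  using rays_disjoint[OF unit' unit', of i k x] inj unfolding ray_def inj_on_def by blast

lemma branch_idx_eq:
  assumes "i \<in> {1..N}" "x \<in> ray e i" "x \<noteq> 0"
  shows "branch_idx N e x = i"
proof -
  have "branch_idx N e x \<in> {1..N} \<and> x \<in> ray e (branch_idx N e x)"
    unfolding branch_idx_def by (rule someI[of _ i]) (use assms in auto)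
  then show ?thesis using rays_meet assms by blast
qed

lemma junction_ray: "x \<in> junction N e \<Longrightarrow> \<exists>i\<in>{1..N}. x \<in> ray e i"
  unfolding junction_def by auto

lemma ray_junction: "i \<in> {1..N} \<Longrightarrow> x \<in> ray e i \<Longrightarrow> x \<in> junction N e"
  unfolding junction_def by auto

lemma Lag_ray: "i \<in> {1..N} \<Longrightarrow> x \<in> ray e i \<Longrightarrow> x \<noteq> 0 \<Longrightarrow> Lag N e L x P = L i (P \<bullet> e i)"
  unfolding Lag_def using branch_idx_eq by simp

lemma Lag_zero: "Lag N e L 0 P = L0 N L (norm P)"
  unfolding Lag_def by simp

lemma L0_le: "i \<in> {1..N} \<Longrightarrow> L0 N L p \<le> L i p"
  unfolding L0_def by (intro Min_le) auto

lemma support: 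
  assumes "i \<in> {1..N}"
  shows "\<exists>s. \<forall>p. L i p \<ge> L i q + s * (p - q)"
proof -
  obtain L1 L2 where h: "\<forall>p. (L i has_real_derivative L1 p) (at p) \<and>
                (L1 has_real_derivative L2 p) (at p) \<and> L2 p \<ge> \<gamma>"
    using Lreg assms by blast
  have mono: "\<And>a b. a \<le> b \<Longrightarrow> L1 a \<le> L1 b"
    using deriv_mono_from_second[of L1 L2 \<gamma>] h gpos by blast
  show ?thesis using support_line[of "L i" L1, OF _ mono] h by blast
qed

lemma L_cont: "i \<in> {1..N} \<Longrightarrow> continuous_on UNIV (L i)"
proof -
  assume "i \<in> {1..N}"
  then obtain L1 where "\<forall>p. (L i has_real_derivative L1 p) (at p)" using Lreg by blast
  then show ?thesis by (meson DERIV_isCont continuous_at_imp_continuous_on)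
qed

end


lemma set_integrable_sbm: "set_integrable M A f \<Longrightarrow> set_borel_measurable M A f"
  unfolding set_integrable_def set_borel_measurable_def by (rule borel_measurable_integrable)

lemma ae_dense:
  assumes ae: "AE s in lborel. s \<in> {0..1::real} \<longrightarrow> P s" and uv: "u < v" "{u<..<v} \<subseteq> {0..1}"
  shows "\<exists>s\<in>{u<..<v}. P s"
proof (rule ccontr)
  assume "\<not> ?thesis"
  then have nP: "\<forall>s\<in>{u<..<v}. \<not> P s" by blast
  have "AE s in lborel. s \<notin> {u<..<v}" using ae
  proof eventually_elim
    fix s assume "s \<in> {0..1} \<longrightarrow> P s"
    then show "s \<notin> {u<..<v}" using nP uv(2) by blast
  qed
  then have "{u<..<v} \<in> null_sets lborel" by (simp add: AE_iff_null_sets)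
  then show False using uv by (auto simp: null_sets_def)
qed

context junc begin

context fixes y x X g assumes adm: "admissible N e y x X g"
begin

lemma gint: "set_integrable lborel {0..1} g" using adm unfolding admissible_def by blast
lemma X0: "X 0 = y" using adm unfolding admissible_def by blast
lemma X1: "X 1 = x" using adm unfolding admissible_def by blast
lemma Xrep: "t \<in> {0..1} \<Longrightarrow> X t = y + set_lebesgue_integral lborel {0..t} g"
  using adm unfolding admissible_def by auto
lemma aeJ: "AE \<tau> in lborel. \<tau> \<in> {0..1} \<longrightarrow> X \<tau> \<in> junction N e"
proof -
  have "AE \<tau> in lborel. \<tau> \<in> {0..1} \<longrightarrow> X \<tau> \<in> junction N e \<and> g \<tau> \<in> adm_dir N e (X \<tau>)"
    using adm unfolding admissible_def by blast
  then show ?thesis by eventually_elim blast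
qed

lemma gint_sub: "S \<in> sets borel \<Longrightarrow> S \<subseteq> {0..1} \<Longrightarrow> set_integrable lborel S g"
  by (rule set_integrable_subset[OF gint]) auto

lemma Xcont: "continuous_on {0..1} X"
proof -
  have gi: "g integrable_on {0..1}" using set_borel_integral_eq_integral(1)[OF gint] .
  have "continuous_on {0..1} (\<lambda>t. y + integral {0..t} g)"
    by (intro continuous_intros indefinite_integral_continuous_1 gi)
  moreover have "\<And>t. t \<in> {0..1} \<Longrightarrow> y + integral {0..t} g = X t"
  proof -
    fix t :: real assume t: "t \<in> {0..1}"
    have "set_integrable lborel {0..t} g" using t by (intro gint_sub) auto
    then show "y + integral {0..t} g = X t" using Xrep[OF t] set_borel_integral_eq_integral(2) by metis
  qed
  ultimately show ?thesis using continuous_on_eq by blast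
qed

lemma XJ: assumes t: "t \<in> {0..1}" shows "X t \<in> junction N e"
proof (rule ccontr)
  assume nj: "X t \<notin> junction N e"
  have "open (- junction N e)" using junction_closed by auto
  then obtain \<epsilon> where \<epsilon>: "\<epsilon> > 0" "ball (X t) \<epsilon> \<subseteq> - junction N e" using nj by (meson ComplI openE)
  obtain d where d: "d > 0" "\<forall>s\<in>{0..1}. dist s t < d \<longrightarrow> dist (X s) (X t) < \<epsilon>"
    using Xcont t \<epsilon>(1) unfolding continuous_on_iff by blast
  define u where "u = max 0 (t - d)"
  define v where "v = min 1 (t + d)"
  have uv: "u < v" "{u<..<v} \<subseteq> {0..1}" using t d(1) by (auto simp: u_def v_def)
  obtain s where s: "s \<in> {u<..<v}" "X s \<in> junction N e" using ae_dense[OF aeJ uv] by blast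
  have "s \<in> {0..1}" "dist s t < d" using s(1) uv by (auto simp: u_def v_def dist_real_def)
  then have "X s \<in> ball (X t) \<epsilon>" using d by (auto simp: dist_commute)
  then show False using s(2) \<epsilon>(2) by auto
qed

lemma seg_int:
  assumes "0 \<le> a" "a \<le> b" "b \<le> 1"
  shows "set_lebesgue_integral lborel {a<..<b} g = X b - X a"
proof -
  have ib: "set_integrable lborel {a<..b} g" "set_integrable lborel {0..a} g"
    using assms by (auto intro!: gint_sub)
  have "{0..b} = {0..a} \<union> {a<..b}" using assms by auto
  moreover have "{0..a} \<inter> {a<..b} = {}" by auto
  ultimately have "set_lebesgue_integral lborel {0..b} g = set_lebesgue_integral lborel {0..a} g + set_lebesgue_integral lborel {a<..b} g"
    using set_integral_Un[of "{0..a}" "{a<..b}" lborel g] ib by simp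
  moreover have "X b = y + set_lebesgue_integral lborel {0..b} g" "X a = y + set_lebesgue_integral lborel {0..a} g"
    using Xrep assms by auto
  moreover have "set_lebesgue_integral lborel {a<..b} g = set_lebesgue_integral lborel {a<..<b} g"
  proof (rule set_integral_cong_set)
    show "set_borel_measurable lborel {a<..<b} g" "set_borel_measurable lborel {a<..b} g"
      using assms by (auto intro!: set_integrable_sbm gint_sub)
    show "AE x in lborel. (x \<in> {a<..<b}) = (x \<in> {a<..b})"
      using AE_lborel_singleton[of b] by eventually_elim auto
  qed
  ultimately show ?thesis by simp
qed

lemma single_ray:
  assumes I: "I \<subseteq> {0..1}" "connected I" and nz: "\<forall>t\<in>I. X t \<noteq> 0"
  shows "\<exists>k\<in>{1..N}. \<forall>t\<in>I. X t \<in> ray e k"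
proof (cases "I = {}")
  case True then show ?thesis using N1 by auto
next
  case False
  then obtain t0 where t0: "t0 \<in> I" by blast
  then obtain k where k: "k \<in> {1..N}" "X t0 \<in> ray e k" using XJ I junction_ray by blast
  have cI: "continuous_on I X" using Xcont I(1) continuous_on_subset by blast
  let ?E1 = "I \<inter> X -` ray e k"
  let ?E2 = "I \<inter> X -` (\<Union>m\<in>{1..N}-{k}. ray e m)"
  have c1: "closedin (top_of_set I) ?E1" using continuous_closedin_preimage[OF cI ray_closed[OF k(1)]] .
  have c2: "closedin (top_of_set I) ?E2"
    by (rule continuous_closedin_preimage[OF cI]) (intro closed_UN; auto intro: ray_closed)
  have cov: "I \<subseteq> ?E1 \<union> ?E2"
  proof
    fix t assume "t \<in> I"
    then obtain m where "m \<in> {1..N}" "X t \<in> ray e m" using XJ I junction_ray by blast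
    then show "t \<in> ?E1 \<union> ?E2" using \<open>t \<in> I\<close> by (cases "m = k") auto
  qed
  have dis: "?E1 \<inter> ?E2 = {}"
  proof (intro equalityI subsetI)
    fix t assume t: "t \<in> ?E1 \<inter> ?E2"
    then have tk: "X t \<in> ray e k" and tI: "t \<in> I" by auto
    from t have "\<exists>m\<in>{1..N}-{k}. X t \<in> ray e m" by auto
    then obtain m where m: "m \<in> {1..N}" "m \<noteq> k" "X t \<in> ray e m" by blast
    have "X t = 0" using rays_meet[OF k(1) m(1)] m tk by metis
    then show "t \<in> {}" using nz tI by auto
  qed simp
  have "t0 \<in> ?E1" using t0 k(2) by simp
  then have ne: "?E1 \<noteq> {}" by blast
  have "?E2 = {}"
  proof (rule ccontr)
    assume ne2: "?E2 \<noteq> {}"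
    have "\<exists>E1 E2. closedin (top_of_set I) E1 \<and> closedin (top_of_set I) E2 \<and> I \<subseteq> E1 \<union> E2 \<and>
      E1 \<inter> E2 = {} \<and> E1 \<noteq> {} \<and> E2 \<noteq> {}"
      by (rule exI[of _ ?E1], rule exI[of _ ?E2]) (intro conjI; fact)
    then show False using I(2) unfolding connected_closedin by (elim notE)
  qed
  then have "I \<subseteq> ?E1" using cov by (simp only: Un_empty_right)
  then have "\<forall>t\<in>I. X t \<in> ray e k" by (auto simp only: subset_iff Int_iff vimage_eq)
  then show ?thesis using k(1) by blast
qed

end
end


lemma integral_open_components:
  fixes f :: "real \<Rightarrow> 'a::{banach, second_countable_topology}"
  assumes U: "open U" and int: "set_integrable lborel U f"
    and z: "\<And>C. C \<in> components U \<Longrightarrow> set_lebesgue_integral lborel C f = 0"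
  shows "set_lebesgue_integral lborel U f = 0"
proof -
  obtain A :: "nat \<Rightarrow> real set" where A: "disjoint_family A" "(\<Union>n. A n) = U"
    "\<And>n. A n = {} \<or> A n \<in> components U"
    using open_components_enum[OF U] by blast
  have meas: "A n \<in> sets lborel" for n
    using A(3)[of n] open_components[OF U] by auto
  have "set_lebesgue_integral lborel (\<Union>n. A n) f = (\<Sum>n. set_lebesgue_integral lborel (A n) f)"
    by (rule lebesgue_integral_countable_add[OF meas]) (use A int in \<open>auto simp: disjoint_family_on_def\<close>)
  also have "\<dots> = (\<Sum>n. 0)"
  proof (intro suminf_cong)
    fix n show "set_lebesgue_integral lborel (A n) f = 0"
      using A(3)[of n] z by (auto simp: set_lebesgue_integral_def)
  qed
  finally show ?thesis using A(2) by simp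
qed

lemma component_interval:
  fixes U :: "real set"
  assumes U: "open U" "U \<subseteq> {s<..<t}" and C: "C \<in> components U"
  shows "\<exists>a b. C = {a<..<b} \<and> s \<le> a \<and> a < b \<and> b \<le> t \<and> a \<notin> U \<and> b \<notin> U"
proof -
  have ne: "C \<noteq> {}" using C by (rule in_components_nonempty)
  have oC: "open C" using open_components[OF U(1) C] .
  have cC: "connected C" using C by (rule in_components_connected)
  have sub: "C \<subseteq> U" using C by (rule in_components_subset)
  have bb: "bdd_below C" "bdd_above C" using sub U(2) by (auto intro!: bdd_belowI[of _ s] bdd_aboveI[of _ t])
  define a where "a = Inf C"
  define b where "b = Sup C"
  have aC: "a \<notin> C"
  proof
    assume "a \<in> C"
    then obtain r where r: "r > 0" "ball a r \<subseteq> C" using oC by (meson openE)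
    then have "a - r/2 \<in> C" by (auto simp: dist_real_def)
    then have "a \<le> a - r/2" unfolding a_def using bb by (intro cInf_lower) auto
    then show False using r by simp
  qed
  have bC: "b \<notin> C"
  proof
    assume "b \<in> C"
    then obtain r where r: "r > 0" "ball b r \<subseteq> C" using oC by (meson openE)
    then have "b + r/2 \<in> C" by (auto simp: dist_real_def)
    then have "b + r/2 \<le> b" unfolding b_def using bb by (intro cSup_upper) auto
    then show False using r by simp
  qed
  have C1: "C \<subseteq> {a<..<b}"
  proof
    fix c assume c: "c \<in> C"
    have "a \<le> c" "c \<le> b" unfolding a_def b_def using c bb by (auto intro: cInf_lower cSup_upper)
    moreover have "c \<noteq> a" "c \<noteq> b" using c aC bC by auto
    ultimately show "c \<in> {a<..<b}" by auto
  qed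
  have C2: "{a<..<b} \<subseteq> C"
  proof
    fix z assume z: "z \<in> {a<..<b}"
    obtain c1 where c1: "c1 \<in> C" "c1 < z" using z ne bb(1) cInf_less_iff[of C z] unfolding a_def by auto
    obtain c2 where c2: "c2 \<in> C" "z < c2" using z ne bb(2) less_cSup_iff[of C z] unfolding b_def by auto
    have "is_interval C" using cC is_interval_connected_1 by blast
    then show "z \<in> C" using c1 c2 unfolding is_interval_1 by (meson less_le)
  qed
  have Ceq: "C = {a<..<b}" using C1 C2 by blast
  have ab: "a < b" using ne Ceq by (metis greaterThanLessThan_empty_iff not_less)
  have sa: "s \<le> a" unfolding a_def using ne sub U(2) by (intro cInf_greatest) auto
  have bt: "b \<le> t" unfolding b_def using ne sub U(2) by (intro cSup_least) auto
  obtain x0 where x0: "x0 \<in> U" "C = connected_component_set U x0" using C components_iff by blast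
  have fr: "frontier C \<subseteq> frontier U" using x0(2) frontier_of_connected_component_subset by metis
  have "a \<in> closure C" unfolding a_def using ne bb(1) by (rule closure_contains_Inf)
  then have "a \<in> frontier C" using aC oC by (simp add: frontier_def interior_open)
  then have aU: "a \<notin> U" using fr U(1) by (auto simp: frontier_def interior_open)
  have "b \<in> closure C" unfolding b_def using ne bb(2) by (rule closure_contains_Sup)
  then have "b \<in> frontier C" using bC oC by (simp add: frontier_def interior_open)
  then have bU: "b \<notin> U" using fr U(1) by (auto simp: frontier_def interior_open)
  show ?thesis using Ceq sa ab bt aU bU by blast
qed


context junc begin
context fixes y x X g assumes adm: "admissible N e y x X g"
begin

lemma U_open: "0 \<le> s \<Longrightarrow> t \<le> 1 \<Longrightarrow> open {\<tau>\<in>{s<..<t}. X \<tau> \<noteq> 0}"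
proof -
  assume st: "0 \<le> s" "t \<le> 1"
  have "continuous_on {s<..<t} X" using Xcont[OF adm] by (rule continuous_on_subset) (use st in auto)
  then have "open ({s<..<t} \<inter> X -` (- {0}))" by (rule continuous_open_preimage) auto
  moreover have "{\<tau>\<in>{s<..<t}. X \<tau> \<noteq> 0} = {s<..<t} \<inter> X -` (- {0})" by auto
  ultimately show ?thesis by simp
qed

lemma comp_facts:
  assumes st: "0 \<le> s" "s \<le> t" "t \<le> 1" "X s = 0" "X t = 0"
    and C: "C \<in> components {\<tau>\<in>{s<..<t}. X \<tau> \<noteq> 0}"
  shows "\<exists>a b k. C = {a<..<b} \<and> s \<le> a \<and> a < b \<and> b \<le> t \<and> X a = 0 \<and> X b = 0 \<and>
     k \<in> {1..N} \<and> (\<forall>\<tau>\<in>C. X \<tau> \<in> ray e k \<and> X \<tau> \<noteq> 0)"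
proof -
  let ?U = "{\<tau>\<in>{s<..<t}. X \<tau> \<noteq> 0}"
  obtain a b where ab: "C = {a<..<b}" "s \<le> a" "a < b" "b \<le> t" "a \<notin> ?U" "b \<notin> ?U"
    using component_interval[OF U_open[OF st(1,3)] _ C] by blast
  have Xa: "X a = 0"
  proof (cases "a = s")
    case True then show ?thesis using st by simp
  next
    case False then show ?thesis using ab by auto
  qed
  have Xb: "X b = 0"
  proof (cases "b = t")
    case True then show ?thesis using st by simp
  next
    case False then show ?thesis using ab by auto
  qed
  have sub: "C \<subseteq> ?U" using C by (rule in_components_subset)
  have C01: "C \<subseteq> {0..1}" using sub st by auto
  have nz: "\<forall>\<tau>\<in>C. X \<tau> \<noteq> 0" using sub by auto
  obtain k where k: "k \<in> {1..N}" "\<forall>\<tau>\<in>C. X \<tau> \<in> ray e k"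
    using single_ray[OF adm C01 in_components_connected[OF C] nz] by blast
  show ?thesis using ab Xa Xb k sub by blast
qed

lemma Zp_int_zero:
  assumes st: "0 \<le> s" "s \<le> t" "t \<le> 1" "X s = 0" "X t = 0"
  shows "set_lebesgue_integral lborel {\<tau>\<in>{s<..<t}. X \<tau> = 0} g = 0"
proof -
  let ?U = "{\<tau>\<in>{s<..<t}. X \<tau> \<noteq> 0}"
  let ?Z = "{\<tau>\<in>{s<..<t}. X \<tau> = 0}"
  have oU: "open ?U" using U_open st by auto
  have Zeq: "?Z = {s<..<t} - ?U" by auto
  have mU: "?U \<in> sets borel" using oU by (rule borel_open)
  have mZ: "?Z \<in> sets borel" unfolding Zeq using mU by (intro sets.Diff) auto
  have s1: "?U \<subseteq> {0..1}" "?Z \<subseteq> {0..1}" using st by auto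
  have iU: "set_integrable lborel ?U g" by (rule gint_sub[OF adm mU s1(1)])
  have iZ: "set_integrable lborel ?Z g" by (rule gint_sub[OF adm mZ s1(2)])
  have un: "?Z \<union> ?U = {s<..<t}" by blast
  have "?Z \<inter> ?U = {}" by blast
  from set_integral_Un[OF this iZ iU] 
  have "set_lebesgue_integral lborel {s<..<t} g = set_lebesgue_integral lborel ?Z g + set_lebesgue_integral lborel ?U g"
    unfolding un .
  moreover have "set_lebesgue_integral lborel {s<..<t} g = 0"
    using seg_int[OF adm st(1-3)] st by simp
  moreover have "set_lebesgue_integral lborel ?U g = 0"
  proof (rule integral_open_components[OF oU iU])
    fix C assume C: "C \<in> components ?U"
    from comp_facts[OF st C] obtain a b k where ab: "C = {a<..<b}" "s \<le> a" "a < b" "b \<le> t" "X a = 0" "X b = 0"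
      "k \<in> {1..N}" "\<forall>\<tau>\<in>C. X \<tau> \<in> ray e k \<and> X \<tau> \<noteq> 0"
      by (elim exE conjE)
    show "set_lebesgue_integral lborel C g = 0"
      using seg_int[OF adm, of a b] ab st by simp
  qed
  ultimately show ?thesis by simp
qed

lemma g_zero_ae: "AE \<tau> in lborel. \<tau> \<in> {0..1} \<and> X \<tau> = 0 \<longrightarrow> g \<tau> = 0"
proof -
  let ?Z = "{\<tau>\<in>{0..1}. X \<tau> = 0}"
  have cZ: "closed ?Z"
  proof -
    have "closed ({0..1} \<inter> X -` {0})" by (rule continuous_closed_preimage[OF Xcont[OF adm]]) auto
    moreover have "?Z = {0..1} \<inter> X -` {0}" by blast
    ultimately show ?thesis by simp
  qed
  have mZ: "?Z \<in> sets borel" using cZ by (rule borel_closed)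
  have Z01: "?Z \<subseteq> {0..1}" by blast
  have iZ: "set_integrable lborel ?Z g" by (rule gint_sub[OF adm mZ Z01])
  have key: "set_lebesgue_integral lborel ({x0<..} \<inter> ?Z) g = 0" for x0
  proof (cases "{x0<..} \<inter> ?Z = {}")
    case True then show ?thesis by (simp add: True set_lebesgue_integral_def)
  next
    case False
    let ?W = "{x0<..} \<inter> ?Z"
    have bW: "bdd_below ?W" "bdd_above ?W" by (rule bdd_belowI[of _ 0], simp, rule bdd_aboveI[of _ 1], simp)
    define s where "s = Inf ?W"
    define t where "t = Sup ?W"
    have sW: "s \<in> closure ?W" unfolding s_def using False bW(1) by (rule closure_contains_Inf)
    have tW: "t \<in> closure ?W" unfolding t_def using False bW(2) by (rule closure_contains_Sup)
    have "closure ?W \<subseteq> ?Z" by (rule closure_minimal[OF _ cZ]) blast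
    then have sZ: "s \<in> ?Z" and tZ: "t \<in> ?Z" using sW tW by blast+
    have xs: "x0 \<le> s" unfolding s_def by (rule cInf_greatest[OF False]) simp
    have le: "s \<le> \<tau> \<and> \<tau> \<le> t" if "\<tau> \<in> ?W" for \<tau>
      unfolding s_def t_def using cInf_lower[OF that bW(1)] cSup_upper[OF that bW(2)] by (rule conjI)
    obtain w where "w \<in> ?W" using False by blast
    then have st: "s \<le> t" using le by (blast intro: order_trans)
    let ?Zp = "{\<tau>\<in>{s<..<t}. X \<tau> = 0}"
    have s0: "0 \<le> s" "t \<le> 1" "X s = 0" "X t = 0" using sZ tZ by simp_all
    have mZp: "?Zp \<in> sets borel"
    proof -
      have "?Zp = {s<..<t} - {\<tau>\<in>{s<..<t}. X \<tau> \<noteq> 0}" by blast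
      moreover have "open {\<tau>\<in>{s<..<t}. X \<tau> \<noteq> 0}" using U_open[OF s0(1,2)] .
      ultimately show ?thesis by (simp only:) (intro sets.Diff borel_open; simp)
    qed
    have mW: "?W \<in> sets borel" using mZ by (intro sets.Int) auto
    have "set_lebesgue_integral lborel ?W g = set_lebesgue_integral lborel ?Zp g"
    proof (rule set_integral_cong_set)
      have "?Zp \<subseteq> {0..1}" using s0 by fastforce
      then show "set_borel_measurable lborel ?Zp g" by (intro set_integrable_sbm gint_sub[OF adm mZp])
      have "?W \<subseteq> {0..1}" by blast
      then show "set_borel_measurable lborel ?W g" by (intro set_integrable_sbm gint_sub[OF adm mW])
      show "AE x in lborel. (x \<in> ?Zp) = (x \<in> ?W)"
        using AE_lborel_singleton[of s] AE_lborel_singleton[of t]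
      proof eventually_elim
        fix \<tau> assume h: "\<tau> \<noteq> s" "\<tau> \<noteq> t"
        show "(\<tau> \<in> ?Zp) = (\<tau> \<in> ?W)"
        proof
          assume a: "\<tau> \<in> ?Zp"
          then have "x0 < \<tau>" "0 \<le> \<tau>" "\<tau> \<le> 1" "X \<tau> = 0" using xs s0 by auto
          then show "\<tau> \<in> ?W" by simp
        next
          assume a: "\<tau> \<in> ?W"
          then have "s \<le> \<tau>" "\<tau> \<le> t" "X \<tau> = 0" using le[OF a] by auto
          then show "\<tau> \<in> ?Zp" using h by simp
        qed
      qed
    qed
    also have "\<dots> = 0" by (rule Zp_int_zero[OF s0(1) st s0(2-4)])
    finally show ?thesis .
  qed
  have aeb: "AE \<tau> in lborel. indicator ?Z \<tau> * (g \<tau> \<bullet> b) = 0" for b :: "real^2"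
  proof (rule ae_zero_Ioi)
    have ii: "integrable lborel (\<lambda>\<tau>. indicator ?Z \<tau> *\<^sub>R g \<tau>)" using iZ unfolding set_integrable_def .
    have eq1: "\<And>A. (\<lambda>\<tau>. (indicator A \<tau> *\<^sub>R g \<tau>) \<bullet> b) = (\<lambda>\<tau>. indicator A \<tau> * (g \<tau> \<bullet> b))"
      by (simp only: inner_scaleR_left)
    show "integrable lborel (\<lambda>\<tau>. indicator ?Z \<tau> * (g \<tau> \<bullet> b))"
      using integrable_inner_left[OF ii, of b] unfolding eq1 .
    fix x0
    have eq2: "(\<lambda>\<tau>. indicator {x0<..} \<tau> *\<^sub>R (indicator ?Z \<tau> * (g \<tau> \<bullet> b))) = (\<lambda>\<tau>. (indicator ({x0<..} \<inter> ?Z) \<tau> *\<^sub>R g \<tau>) \<bullet> b)"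
      by (rule ext) (simp add: indicator_inter_arith inner_scaleR_left)
    have m3: "{x0<..} \<inter> ?Z \<in> sets borel" using mZ by (intro sets.Int) auto
    have m4: "{x0<..} \<inter> ?Z \<subseteq> {0..1}" by blast
    have ii2: "integrable lborel (\<lambda>\<tau>. indicator ({x0<..} \<inter> ?Z) \<tau> *\<^sub>R g \<tau>)"
      using gint_sub[OF adm m3 m4] unfolding set_integrable_def .
    have "set_lebesgue_integral lborel {x0<..} (\<lambda>\<tau>. indicator ?Z \<tau> * (g \<tau> \<bullet> b))
        = set_lebesgue_integral lborel ({x0<..} \<inter> ?Z) g \<bullet> b"
      unfolding set_lebesgue_integral_def eq2 using integral_inner_left[OF ii2, of b] by simp
    also have "\<dots> = 0" using key by simp
    finally show "set_lebesgue_integral lborel {x0<..} (\<lambda>\<tau>. indicator ?Z \<tau> * (g \<tau> \<bullet> b)) = 0" .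
  qed
  have "AE \<tau> in lborel. \<forall>b\<in>(Basis::(real^2) set). indicator ?Z \<tau> * (g \<tau> \<bullet> b) = 0"
    by (rule eventually_ball_finite) (simp, intro ballI aeb)
  then show ?thesis
  proof eventually_elim
    fix \<tau> assume h: "\<forall>b\<in>Basis. indicator ?Z \<tau> * (g \<tau> \<bullet> (b::real^2)) = 0"
    show "\<tau> \<in> {0..1} \<and> X \<tau> = 0 \<longrightarrow> g \<tau> = 0"
    proof
      assume "\<tau> \<in> {0..1} \<and> X \<tau> = 0"
      then have "indicator ?Z \<tau> = (1::real)" by (simp add: indicator_def)
      then have "\<forall>b\<in>Basis. g \<tau> \<bullet> (b::real^2) = 0" using h by simp
      then show "g \<tau> = 0" using euclidean_all_zero_iff by blast
    qed
  qed
qed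

end
end


context junc begin
context fixes y x X g assumes adm: "admissible N e y x X g"
begin

lemma gint_sub_integrable: "S \<in> sets borel \<Longrightarrow> S \<subseteq> {0..1} \<Longrightarrow> integrable lborel (\<lambda>\<tau>. indicator S \<tau> *\<^sub>R g \<tau>)"
  using gint_sub[OF adm] unfolding set_integrable_def by blast

lemma affine_int:
  assumes S: "S \<in> sets borel" "S \<subseteq> {0..1}"
  shows "set_integrable lborel S (\<lambda>\<tau>. c + d * (g \<tau> \<bullet> v))"
    and "set_lebesgue_integral lborel S (\<lambda>\<tau>. c + d * (g \<tau> \<bullet> v)) = measure lborel S * c + d * (set_lebesgue_integral lborel S g \<bullet> v)"
proof -
  have fin: "emeasure lborel S < \<infinity>"
  proof -
    have "emeasure lborel S \<le> emeasure lborel {0..1::real}" using S by (intro emeasure_mono) auto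
    then show ?thesis by (simp add: le_less_trans)
  qed
  have ic: "set_integrable lborel S (\<lambda>\<tau>. c)"
    unfolding set_integrable_def using S fin
    by (intro integrable_scaleR_left integrable_real_indicator) auto
  have ig: "integrable lborel (\<lambda>\<tau>. indicator S \<tau> *\<^sub>R g \<tau>)" by (rule gint_sub_integrable[OF S])
  have eq1: "(\<lambda>\<tau>. indicator S \<tau> *\<^sub>R (d * (g \<tau> \<bullet> v))) = (\<lambda>\<tau>. d * ((indicator S \<tau> *\<^sub>R g \<tau>) \<bullet> v))"
    by (rule ext) (simp add: inner_scaleR_left)
  have igv: "set_integrable lborel S (\<lambda>\<tau>. d * (g \<tau> \<bullet> v))"
    unfolding set_integrable_def eq1 by (intro integrable_mult_right integrable_inner_left ig)
  show "set_integrable lborel S (\<lambda>\<tau>. c + d * (g \<tau> \<bullet> v))"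
    by (rule set_integral_add(1)[OF ic igv])
  have "set_lebesgue_integral lborel S (\<lambda>\<tau>. c + d * (g \<tau> \<bullet> v)) =
     set_lebesgue_integral lborel S (\<lambda>\<tau>. c) + set_lebesgue_integral lborel S (\<lambda>\<tau>. d * (g \<tau> \<bullet> v))"
    by (rule set_integral_add(2)[OF ic igv])
  also have "set_lebesgue_integral lborel S (\<lambda>\<tau>. c) = measure lborel S * c"
    using set_integral_const[of S lborel c] S fin by simp
  also have "set_lebesgue_integral lborel S (\<lambda>\<tau>. d * (g \<tau> \<bullet> v)) = d * (set_lebesgue_integral lborel S g \<bullet> v)"
    unfolding set_lebesgue_integral_def eq1
    using integral_inner_left[OF ig, of v] by simp
  finally show "set_lebesgue_integral lborel S (\<lambda>\<tau>. c + d * (g \<tau> \<bullet> v)) = measure lborel S * c + d * (set_lebesgue_integral lborel S g \<bullet> v)" .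
qed

lemma seg_bound:
  assumes ab: "0 \<le> a" "a < b" "b \<le> 1" and k: "k \<in> {1..N}"
    and onray: "\<forall>\<tau>\<in>{a<..<b}. X \<tau> \<in> ray e k \<and> X \<tau> \<noteq> 0"
    and Fi: "set_integrable lborel {0..1} (\<lambda>\<tau>. Lag N e L (X \<tau>) (g \<tau>))"
  shows "set_lebesgue_integral lborel {a<..<b} (\<lambda>\<tau>. Lag N e L (X \<tau>) (g \<tau>)) \<ge>
     (b - a) * L k (((X b - X a) \<bullet> e k) / (b - a))"
proof -
  define q where "q = ((X b - X a) \<bullet> e k) / (b - a)"
  obtain s where s: "\<forall>p. L k p \<ge> L k q + s * (p - q)" using support[OF k] by blast
  have S: "{a<..<b} \<in> sets borel" "{a<..<b} \<subseteq> {0..1}" using ab by auto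
  have Fi2: "set_integrable lborel {a<..<b} (\<lambda>\<tau>. Lag N e L (X \<tau>) (g \<tau>))"
    by (rule set_integrable_subset[OF Fi]) (use S in auto)
  have "set_lebesgue_integral lborel {a<..<b} (\<lambda>\<tau>. (L k q - s * q) + s * (g \<tau> \<bullet> e k)) \<le>
      set_lebesgue_integral lborel {a<..<b} (\<lambda>\<tau>. Lag N e L (X \<tau>) (g \<tau>))"
  proof (rule set_integral_mono[OF affine_int(1)[OF S] Fi2])
    fix \<tau> assume t: "\<tau> \<in> {a<..<b}"
    have "Lag N e L (X \<tau>) (g \<tau>) = L k (g \<tau> \<bullet> e k)" using onray t Lag_ray[OF k] by blast
    moreover have "L k (g \<tau> \<bullet> e k) \<ge> L k q + s * (g \<tau> \<bullet> e k - q)" using s by blast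
    ultimately show "(L k q - s * q) + s * (g \<tau> \<bullet> e k) \<le> Lag N e L (X \<tau>) (g \<tau>)"
      by (simp add: algebra_simps)
  qed
  moreover have "set_lebesgue_integral lborel {a<..<b} (\<lambda>\<tau>. (L k q - s * q) + s * (g \<tau> \<bullet> e k))
     = (b - a) * L k q"
  proof -
    have "set_lebesgue_integral lborel {a<..<b} (\<lambda>\<tau>. (L k q - s * q) + s * (g \<tau> \<bullet> e k))
      = (b - a) * (L k q - s * q) + s * ((X b - X a) \<bullet> e k)"
      using affine_int(2)[OF S] seg_int[OF adm ab(1) less_imp_le[OF ab(2)] ab(3)] ab by simp
    also have "(X b - X a) \<bullet> e k = (b - a) * q" unfolding q_def using ab by simp
    finally show ?thesis by (simp add: algebra_simps)
  qed
  ultimately show ?thesis unfolding q_def by simp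
qed

end
end


context junc begin
context fixes y x X g assumes adm: "admissible N e y x X g"
begin

lemma mid_bound:
  assumes st: "0 \<le> t1" "t1 \<le> t2" "t2 \<le> 1" "X t1 = 0" "X t2 = 0"
    and Fi: "set_integrable lborel {0..1} (\<lambda>\<tau>. Lag N e L (X \<tau>) (g \<tau>))"
  shows "set_lebesgue_integral lborel {t1..t2} (\<lambda>\<tau>. Lag N e L (X \<tau>) (g \<tau>)) \<ge> (t2 - t1) * L0 N L 0"
proof -
  define sl where "sl k = (SOME s. \<forall>p. L k p \<ge> L k 0 + s * (p - 0))" for k
  have slp: "L k p \<ge> L k 0 + sl k * p" if k: "k \<in> {1..N}" for k p
  proof -
    have "\<forall>p. L k p \<ge> L k 0 + sl k * (p - 0)" unfolding sl_def by (rule someI_ex[OF support[OF k]])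
    then show ?thesis by simp
  qed
  define U where "U = {\<tau>\<in>{t1<..<t2}. X \<tau> \<noteq> 0}"
  define T where "T k = {\<tau>\<in>{t1<..<t2}. X \<tau> \<in> ray e k \<and> X \<tau> \<noteq> 0}" for k
  have oU: "open U" unfolding U_def by (rule U_open[OF adm st(1) st(3)])
  have U01: "U \<subseteq> {t1..t2}" unfolding U_def by auto
  have cI: "continuous_on {t1<..<t2} X" using Xcont[OF adm] by (rule continuous_on_subset) (use st in auto)
  have mT: "T k \<in> sets borel" if k: "k \<in> {1..N}" for k
  proof -
    have "open ({t1<..<t2} \<inter> X -` (- ray e k))"
      by (rule continuous_open_preimage[OF cI]) (use ray_closed[OF k] in auto)
    moreover have "T k = U - ({t1<..<t2} \<inter> X -` (- ray e k))" unfolding T_def U_def by blast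
    ultimately show ?thesis using oU by (metis borel_open sets.Diff)
  qed
  have T01: "T k \<subseteq> {0..1}" for k unfolding T_def using st by auto
  have TU: "T k \<subseteq> U" for k unfolding T_def U_def by blast
  define h where "h \<tau> = (\<Sum>k\<in>{1..N}. indicator (T k) \<tau> * (sl k * (g \<tau> \<bullet> e k)))" for \<tau>
  have heq: "h = (\<lambda>\<tau>. \<Sum>k\<in>{1..N}. sl k * ((indicator (T k) \<tau> *\<^sub>R g \<tau>) \<bullet> e k))"
    unfolding h_def by (intro ext sum.cong refl) (simp add: inner_scaleR_left)
  have hint: "integrable lborel h"
    unfolding heq
  proof (rule Bochner_Integration.integrable_sum)
    fix k assume k: "k \<in> {1..N}"
    have "integrable lborel (\<lambda>\<tau>. indicator (T k) \<tau> *\<^sub>R g \<tau>)"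
      by (rule gint_sub_integrable[OF adm mT[OF k] T01])
    then show "integrable lborel (\<lambda>\<tau>. sl k * ((indicator (T k) \<tau> *\<^sub>R g \<tau>) \<bullet> e k))"
      by (intro integrable_mult_right integrable_inner_left)
  qed
  have hT: "h \<tau> = sl k * (g \<tau> \<bullet> e k)" if k: "k \<in> {1..N}" and t: "\<tau> \<in> T k" for k \<tau>
  proof -
    have "h \<tau> = indicator (T k) \<tau> * (sl k * (g \<tau> \<bullet> e k)) +
       (\<Sum>m\<in>{1..N}-{k}. indicator (T m) \<tau> * (sl m * (g \<tau> \<bullet> e m)))"
      unfolding h_def using k by (intro sum.remove) auto
    moreover have "(\<Sum>m\<in>{1..N}-{k}. indicator (T m) \<tau> * (sl m * (g \<tau> \<bullet> e m))) = 0"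
    proof (intro sum.neutral ballI)
      fix m assume m: "m \<in> {1..N}-{k}"
      have "\<tau> \<notin> T m"
      proof
        assume "\<tau> \<in> T m"
        then have "X \<tau> \<in> ray e m" "X \<tau> \<in> ray e k" "X \<tau> \<noteq> 0" using t unfolding T_def by auto
        then show False using rays_meet[of m k "X \<tau>"] m k by auto
      qed
      then show "indicator (T m) \<tau> * (sl m * (g \<tau> \<bullet> e m)) = 0" by simp
    qed
    ultimately show ?thesis using t by simp
  qed
  have h0: "h \<tau> = 0" if "\<tau> \<notin> U" for \<tau>
  proof -
    have "\<And>k. \<tau> \<notin> T k" using that TU by blast
    then show ?thesis unfolding h_def by simp
  qed
  have hU: "set_lebesgue_integral lborel U h = 0"
  proof (rule integral_open_components[OF oU])
    show "set_integrable lborel U h" unfolding set_integrable_def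
      using oU by (intro integrable_mult_indicator hint) auto
    fix C assume C: "C \<in> components U"
    from comp_facts[OF adm st C[unfolded U_def]] obtain a b k where ab: "C = {a<..<b}" "t1 \<le> a" "a < b" "b \<le> t2" "X a = 0" "X b = 0"
      "k \<in> {1..N}" "\<forall>\<tau>\<in>C. X \<tau> \<in> ray e k \<and> X \<tau> \<noteq> 0"
      by (elim exE conjE)
    have CT: "C \<subseteq> T k" using in_components_subset[OF C] ab(8) unfolding U_def T_def by blast
    have "set_lebesgue_integral lborel C h = set_lebesgue_integral lborel C (\<lambda>\<tau>. 0 + sl k * (g \<tau> \<bullet> e k))"
      using hT[OF ab(7)] CT ab(1) by (intro set_lebesgue_integral_cong) auto
    also have "\<dots> = measure lborel C * 0 + sl k * (set_lebesgue_integral lborel C g \<bullet> e k)"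
      using ab st by (intro affine_int(2)[OF adm]) auto
    also have "set_lebesgue_integral lborel C g = 0" using seg_int[OF adm, of a b] ab st by simp
    finally show "set_lebesgue_integral lborel C h = 0" by simp
  qed
  have hI: "set_lebesgue_integral lborel {t1..t2} h = 0"
  proof -
    have "set_lebesgue_integral lborel {t1..t2} h = set_lebesgue_integral lborel U h"
      unfolding set_lebesgue_integral_def
    proof (intro Bochner_Integration.integral_cong refl)
      fix \<tau> show "indicator {t1..t2} \<tau> *\<^sub>R h \<tau> = indicator U \<tau> *\<^sub>R h \<tau>"
        using h0[of \<tau>] U01 by (cases "\<tau> \<in> U") auto
    qed
    then show ?thesis using hU by simp
  qed
  have ae: "AE \<tau> in lborel. \<tau> \<in> {t1..t2} \<longrightarrow> L0 N L 0 + h \<tau> \<le> Lag N e L (X \<tau>) (g \<tau>)"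
    using g_zero_ae[OF adm]
  proof eventually_elim
    fix \<tau> assume gz: "\<tau> \<in> {0..1} \<and> X \<tau> = 0 \<longrightarrow> g \<tau> = 0"
    show "\<tau> \<in> {t1..t2} \<longrightarrow> L0 N L 0 + h \<tau> \<le> Lag N e L (X \<tau>) (g \<tau>)"
    proof
      assume t: "\<tau> \<in> {t1..t2}"
      then have t01: "\<tau> \<in> {0..1}" using st by auto
      show "L0 N L 0 + h \<tau> \<le> Lag N e L (X \<tau>) (g \<tau>)"
      proof (cases "X \<tau> = 0")
        case True
        then have "g \<tau> = 0" "h \<tau> = 0" using gz t01 h0[of \<tau>] unfolding U_def by auto
        then show ?thesis using True by (simp add: Lag_zero)
      next
        case False
        have "\<tau> \<noteq> t1" "\<tau> \<noteq> t2" using False st by auto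
        then have tU: "\<tau> \<in> {t1<..<t2}" using t by auto
        obtain k where k: "k \<in> {1..N}" "X \<tau> \<in> ray e k" using XJ[OF adm t01] junction_ray by blast
        have tT: "\<tau> \<in> T k" unfolding T_def using tU k False by blast
        have "Lag N e L (X \<tau>) (g \<tau>) = L k (g \<tau> \<bullet> e k)" by (rule Lag_ray[OF k False])
        moreover have "L k (g \<tau> \<bullet> e k) \<ge> L k 0 + sl k * (g \<tau> \<bullet> e k)" by (rule slp[OF k(1)])
        moreover have "L0 N L 0 \<le> L k 0" by (rule L0_le[OF k(1)])
        ultimately show ?thesis using hT[OF k(1) tT] by simp
      qed
    qed
  qed
  have fin: "emeasure lborel {t1..t2} < \<infinity>" using st by (simp add: emeasure_lborel_Icc)
  have ic: "set_integrable lborel {t1..t2} (\<lambda>\<tau>. L0 N L 0)"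
    unfolding set_integrable_def using fin
    by (intro integrable_scaleR_left integrable_real_indicator) auto
  have ih: "set_integrable lborel {t1..t2} h" unfolding set_integrable_def
    by (intro integrable_mult_indicator hint) auto
  have iF: "set_integrable lborel {t1..t2} (\<lambda>\<tau>. Lag N e L (X \<tau>) (g \<tau>))"
    by (rule set_integrable_subset[OF Fi]) (use st in auto)
  have "set_lebesgue_integral lborel {t1..t2} (\<lambda>\<tau>. L0 N L 0 + h \<tau>) \<le>
      set_lebesgue_integral lborel {t1..t2} (\<lambda>\<tau>. Lag N e L (X \<tau>) (g \<tau>))"
    by (rule set_integral_mono_AE[OF set_integral_add(1)[OF ic ih] iF ae])
  moreover have "set_lebesgue_integral lborel {t1..t2} (\<lambda>\<tau>. L0 N L 0 + h \<tau>) = (t2 - t1) * L0 N L 0"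
  proof -
    have "set_lebesgue_integral lborel {t1..t2} (\<lambda>\<tau>. L0 N L 0 + h \<tau>) =
        set_lebesgue_integral lborel {t1..t2} (\<lambda>\<tau>. L0 N L 0) + set_lebesgue_integral lborel {t1..t2} h"
      by (rule set_integral_add(2)[OF ic ih])
    also have "set_lebesgue_integral lborel {t1..t2} (\<lambda>\<tau>. L0 N L 0) = (t2 - t1) * L0 N L 0"
      using set_integral_const[of "{t1..t2}" lborel "L0 N L 0"] fin st by simp
    finally show ?thesis using hI by simp
  qed
  ultimately show ?thesis by simp
qed

end
end


context junc begin
context fixes y x X g assumes adm: "admissible N e y x X g"
begin

lemma int_cong_01:
  assumes Fi: "set_integrable lborel {0..1} (F::real\<Rightarrow>real)" and S: "S \<in> sets borel" "S \<subseteq> {0..1}"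
    and ae: "\<And>\<tau>. \<tau> \<noteq> 0 \<Longrightarrow> \<tau> \<noteq> 1 \<Longrightarrow> \<tau> \<in> S \<longleftrightarrow> \<tau> \<in> {0..1}"
  shows "set_lebesgue_integral lborel {0..1} F = set_lebesgue_integral lborel S F"
proof (rule set_integral_cong_set)
  show "set_borel_measurable lborel S F" using set_integrable_subset[OF Fi] S by (intro set_integrable_sbm) auto
  show "set_borel_measurable lborel {0..1} F" using Fi by (rule set_integrable_sbm)
  show "AE x in lborel. (x \<in> S) = (x \<in> {0..1})"
    using AE_lborel_singleton[of 0] AE_lborel_singleton[of 1] by eventually_elim (use ae in blast)
qed

lemma lower:
  assumes Fi: "set_integrable lborel {0..1} (\<lambda>\<tau>. Lag N e L (X \<tau>) (g \<tau>))"
  shows "min (Dstraight N e L y x) (Djunction N e L y x) \<le> ereal (set_lebesgue_integral lborel {0..1} (\<lambda>\<tau>. Lag N e L (X \<tau>) (g \<tau>)))"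
proof -
  let ?F = "\<lambda>\<tau>. Lag N e L (X \<tau>) (g \<tau>)"
  have iF: "\<And>S. S \<in> sets borel \<Longrightarrow> S \<subseteq> {0..1} \<Longrightarrow> set_integrable lborel S ?F"
    by (rule set_integrable_subset[OF Fi]) auto
  show ?thesis
  proof (cases "\<forall>t\<in>{0..1}. X t \<noteq> 0")
    case True
    obtain k where k: "k \<in> {1..N}" "\<forall>t\<in>{0..1}. X t \<in> ray e k"
      using single_ray[OF adm _ _ True] by auto
    have bnd: "set_lebesgue_integral lborel {0<..<1} ?F \<ge> (1 - 0) * L k (((X 1 - X 0) \<bullet> e k) / (1 - 0))"
      by (rule seg_bound[OF adm _ _ _ k(1) _ Fi]) (use k True in auto)
    have eq: "set_lebesgue_integral lborel {0..1} ?F = set_lebesgue_integral lborel {0<..<1} ?F"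
      by (rule int_cong_01[OF Fi]) auto
    have y0: "y \<noteq> 0" "y \<in> ray e k" "x \<in> ray e k" using True k X0[OF adm] X1[OF adm] by auto
    define i where "i = (SOME i. i \<in> {1..N} \<and> y \<in> ray e i \<and> x \<in> ray e i)"
    have "i \<in> {1..N} \<and> y \<in> ray e i \<and> x \<in> ray e i" unfolding i_def
      by (rule someI[of _ k]) (use k y0 in auto)
    then have ik: "i = k" using rays_meet[of i k y] k y0 by blast
    have ds: "Dstraight N e L y x = ereal (L k (x \<bullet> e k - y \<bullet> e k))"
      unfolding Dstraight_def using y0 k ik unfolding i_def Let_def by auto
    have "L k (x \<bullet> e k - y \<bullet> e k) \<le> set_lebesgue_integral lborel {0..1} ?F"
      using bnd eq X0[OF adm] X1[OF adm] by (simp add: inner_diff_left)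
    then have "Dstraight N e L y x \<le> ereal (set_lebesgue_integral lborel {0..1} ?F)" using ds by simp
    then show ?thesis by (rule min.coboundedI1)
  next
    case False
    let ?Z = "{\<tau>\<in>{0..1}. X \<tau> = 0}"
    have cZ: "closed ?Z"
    proof -
      have "closed ({0..1} \<inter> X -` {0})" by (rule continuous_closed_preimage[OF Xcont[OF adm]]) auto
      moreover have "?Z = {0..1} \<inter> X -` {0}" by blast
      ultimately show ?thesis by simp
    qed
    have neZ: "?Z \<noteq> {}" using False by blast
    have bZ: "bdd_below ?Z" "bdd_above ?Z" by (rule bdd_belowI[of _ 0], simp, rule bdd_aboveI[of _ 1], simp)
    define t1 where "t1 = Inf ?Z"
    define t2 where "t2 = Sup ?Z"
    have t1Z: "t1 \<in> ?Z" unfolding t1_def by (rule closed_contains_Inf[OF neZ bZ(1) cZ])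
    have t2Z: "t2 \<in> ?Z" unfolding t2_def by (rule closed_contains_Sup[OF neZ bZ(2) cZ])
    have lt1: "X \<tau> \<noteq> 0" if "\<tau> \<in> {0..1}" "\<tau> < t1" for \<tau>
    proof
      assume "X \<tau> = 0"
      then have "\<tau> \<in> ?Z" using that by simp
      then have "t1 \<le> \<tau>" unfolding t1_def by (rule cInf_lower[OF _ bZ(1)])
      then show False using that by simp
    qed
    have gt2: "X \<tau> \<noteq> 0" if "\<tau> \<in> {0..1}" "t2 < \<tau>" for \<tau>
    proof
      assume "X \<tau> = 0"
      then have "\<tau> \<in> ?Z" using that by simp
      then have "\<tau> \<le> t2" unfolding t2_def by (rule cSup_upper[OF _ bZ(2)])
      then show False using that by simp
    qed
    have tt: "0 \<le> t1" "t1 \<le> 1" "0 \<le> t2" "t2 \<le> 1" "X t1 = 0" "X t2 = 0" using t1Z t2Z by simp_all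
    have t12: "t1 \<le> t2" unfolding t1_def using t2Z bZ(1) by (rule cInf_lower)
    have p1: "\<exists>v1. E1 N e L t1 y = ereal v1 \<and> set_lebesgue_integral lborel {0<..<t1} ?F \<ge> v1 + t1 * L0 N L 0"
    proof (cases "y = 0")
      case True
      then have "X 0 = 0" using X0[OF adm] by simp
      then have "0 \<in> ?Z" by simp
      then have "t1 \<le> 0" unfolding t1_def by (rule cInf_lower[OF _ bZ(1)])
      then have "t1 = 0" using tt by simp
      then show ?thesis using True by (simp add: E1_def set_lebesgue_integral_def)
    next
      case False
      have "t1 \<noteq> 0" using False tt X0[OF adm] by auto
      then have t1p: "t1 > 0" using tt by simp
      have nz: "\<forall>t\<in>{0..<t1}. X t \<noteq> 0" using lt1 tt by auto
      obtain j where j: "j \<in> {1..N}" "\<forall>t\<in>{0..<t1}. X t \<in> ray e j"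
      proof -
        have "{0..<t1} \<subseteq> {0..1}" using tt by auto
        then show ?thesis using single_ray[OF adm _ connected_Ico nz] that by blast
      qed
      have yj: "y \<in> ray e j" using j(2) t1p X0[OF adm] by force
      have bj: "branch_idx N e y = j" by (rule branch_idx_eq[OF j(1) yj False])
      have bnd: "set_lebesgue_integral lborel {0<..<t1} ?F \<ge> (t1 - 0) * L j (((X t1 - X 0) \<bullet> e j) / (t1 - 0))"
        by (rule seg_bound[OF adm _ t1p tt(2) j(1) _ Fi]) (use j nz in auto)
      then have bnd': "set_lebesgue_integral lborel {0<..<t1} ?F \<ge> t1 * L j (- (y \<bullet> e j) / t1)"
        using tt X0[OF adm] by simp
      show ?thesis
        by (rule exI[of _ "t1 * L j (- (y \<bullet> e j) / t1) - t1 * L0 N L 0"])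
           (use bnd' False t1p bj in \<open>simp add: E1_def Let_def\<close>)
    qed
    have p3: "\<exists>v2. E2 N e L t2 x = ereal v2 \<and> set_lebesgue_integral lborel {t2<..<1} ?F \<ge> v2 - t2 * L0 N L 0"
    proof (cases "x = 0")
      case True
      then have "X 1 = 0" using X1[OF adm] by simp
      then have "1 \<in> ?Z" by simp
      then have "1 \<le> t2" unfolding t2_def by (rule cSup_upper[OF _ bZ(2)])
      then have "t2 = 1" using tt by simp
      then show ?thesis using True by (simp add: E2_def set_lebesgue_integral_def)
    next
      case False
      have "t2 \<noteq> 1" using False tt X1[OF adm] by auto
      then have t2p: "t2 < 1" using tt by simp
      have nz: "\<forall>t\<in>{t2<..1}. X t \<noteq> 0" using gt2 tt by auto
      obtain i where i: "i \<in> {1..N}" "\<forall>t\<in>{t2<..1}. X t \<in> ray e i"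
      proof -
        have "{t2<..1} \<subseteq> {0..1}" using tt by auto
        then show ?thesis using single_ray[OF adm _ connected_Ioc nz] that by blast
      qed
      have xi: "x \<in> ray e i" using i(2) t2p X1[OF adm] by force
      have bi: "branch_idx N e x = i" by (rule branch_idx_eq[OF i(1) xi False])
      have bnd: "set_lebesgue_integral lborel {t2<..<1} ?F \<ge> (1 - t2) * L i (((X 1 - X t2) \<bullet> e i) / (1 - t2))"
        by (rule seg_bound[OF adm tt(3) t2p _ i(1) _ Fi]) (use i nz in auto)
      then have bnd': "set_lebesgue_integral lborel {t2<..<1} ?F \<ge> (1 - t2) * L i ((x \<bullet> e i) / (1 - t2))"
        using tt X1[OF adm] by simp
      show ?thesis
        by (rule exI[of _ "(1 - t2) * L i ((x \<bullet> e i) / (1 - t2)) + t2 * L0 N L 0"])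
           (use bnd' False t2p bi in \<open>simp add: E2_def Let_def\<close>)
    qed
    obtain v1 where v1: "E1 N e L t1 y = ereal v1" "set_lebesgue_integral lborel {0<..<t1} ?F \<ge> v1 + t1 * L0 N L 0"
      using p1 by blast
    obtain v2 where v2: "E2 N e L t2 x = ereal v2" "set_lebesgue_integral lborel {t2<..<1} ?F \<ge> v2 - t2 * L0 N L 0"
      using p3 by blast
    have mid: "set_lebesgue_integral lborel {t1..t2} ?F \<ge> (t2 - t1) * L0 N L 0"
      by (rule mid_bound[OF adm tt(1) t12 tt(4) tt(5) tt(6) Fi])
    have iA: "set_integrable lborel {0<..<t1} ?F" using tt by (intro iF) auto
    have iB: "set_integrable lborel {t1..t2} ?F" using tt by (intro iF) auto
    have iC: "set_integrable lborel {t2<..<1} ?F" using tt by (intro iF) auto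
    have d1: "{0<..<t1} \<inter> {t1..t2} = {}" by auto
    have d2: "({0<..<t1} \<union> {t1..t2}) \<inter> {t2<..<1} = {}" using t12 by auto
    have iAB: "set_integrable lborel ({0<..<t1} \<union> {t1..t2}) ?F" by (rule set_integrable_Un[OF iA iB]) auto
    have "set_lebesgue_integral lborel ({0<..<t1} \<union> {t1..t2} \<union> {t2<..<1}) ?F =
        set_lebesgue_integral lborel ({0<..<t1} \<union> {t1..t2}) ?F + set_lebesgue_integral lborel {t2<..<1} ?F"
      by (rule set_integral_Un[OF d2 iAB iC])
    also have "set_lebesgue_integral lborel ({0<..<t1} \<union> {t1..t2}) ?F =
        set_lebesgue_integral lborel {0<..<t1} ?F + set_lebesgue_integral lborel {t1..t2} ?F"
      by (rule set_integral_Un[OF d1 iA iB])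
    finally have dec: "set_lebesgue_integral lborel ({0<..<t1} \<union> {t1..t2} \<union> {t2<..<1}) ?F =
        set_lebesgue_integral lborel {0<..<t1} ?F + set_lebesgue_integral lborel {t1..t2} ?F + set_lebesgue_integral lborel {t2<..<1} ?F" .
    have eq: "set_lebesgue_integral lborel {0..1} ?F = set_lebesgue_integral lborel ({0<..<t1} \<union> {t1..t2} \<union> {t2<..<1}) ?F"
    proof (rule int_cong_01[OF Fi])
      show "{0<..<t1} \<union> {t1..t2} \<union> {t2<..<1} \<in> sets borel" by simp
      show "{0<..<t1} \<union> {t1..t2} \<union> {t2<..<1} \<subseteq> {0..1}" using tt by auto
      fix \<tau> :: real assume "\<tau> \<noteq> 0" "\<tau> \<noteq> 1"
      then show "\<tau> \<in> {0<..<t1} \<union> {t1..t2} \<union> {t2<..<1} \<longleftrightarrow> \<tau> \<in> {0..1}" using tt by auto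
    qed
    have tot: "v1 + v2 \<le> set_lebesgue_integral lborel {0..1} ?F"
      using eq dec v1(2) v2(2) mid by (simp add: algebra_simps)
    have "Djunction N e L y x \<le> E1 N e L t1 y + E2 N e L t2 x"
      unfolding Djunction_def by (rule Inf_lower) (use tt t12 in blast)
    also have "\<dots> = ereal (v1 + v2)" using v1(1) v2(1) by simp
    also have "\<dots> \<le> ereal (set_lebesgue_integral lborel {0..1} ?F)" using tot by simp
    finally show ?thesis by (rule min.coboundedI2)
  qed
qed

end
end


lemma fin_sub_Icc:
  fixes A :: "real set"
  assumes "A \<in> sets borel" "A \<subseteq> {a..b}"
  shows "emeasure lborel A < \<infinity>"
proof -
  have "emeasure lborel A \<le> emeasure lborel {a..b}" using assms by (intro emeasure_mono) auto
  also have "\<dots> < \<infinity>" by (cases "a \<le> b") auto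
  finally show ?thesis .
qed

lemma set_int_ind_const:
  fixes S A :: "real set" and v :: "'a::{banach, second_countable_topology}"
  assumes "S \<in> sets borel" "A \<in> sets borel" "emeasure lborel (S \<inter> A) < \<infinity>"
  shows "set_integrable lborel S (\<lambda>\<tau>. indicator A \<tau> *\<^sub>R v)"
    and "set_lebesgue_integral lborel S (\<lambda>\<tau>. indicator A \<tau> *\<^sub>R v) = measure lborel (S \<inter> A) *\<^sub>R v"
proof -
  have eq: "(\<lambda>\<tau>. indicator S \<tau> *\<^sub>R (indicator A \<tau> *\<^sub>R v)) = (\<lambda>\<tau>. indicator (S \<inter> A) \<tau> *\<^sub>R v)"
    by (rule ext) (simp add: indicator_inter_arith)
  have ii: "integrable lborel (indicator (S \<inter> A) :: real \<Rightarrow> real)"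
    using assms by (intro integrable_real_indicator) auto
  show "set_integrable lborel S (\<lambda>\<tau>. indicator A \<tau> *\<^sub>R v)"
    unfolding set_integrable_def eq by (intro integrable_scaleR_left ii)
  show "set_lebesgue_integral lborel S (\<lambda>\<tau>. indicator A \<tau> *\<^sub>R v) = measure lborel (S \<inter> A) *\<^sub>R v"
    unfolding set_lebesgue_integral_def eq using ii by simp
qed

lemma set_int_ind_real:
  fixes S A :: "real set"
  assumes "S \<in> sets borel" "A \<in> sets borel" "emeasure lborel (S \<inter> A) < \<infinity>"
  shows "set_integrable lborel S (\<lambda>\<tau>. indicator A \<tau> * (c::real))"
    and "set_lebesgue_integral lborel S (\<lambda>\<tau>. indicator A \<tau> * c) = measure lborel (S \<inter> A) * c"
  using set_int_ind_const[OF assms, of c] by simp_all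

context junc begin

lemma D0_le_path:
  assumes adm: "admissible N e y x X g" and P: "finite P"
    and \<psi>i: "set_integrable lborel {0..1} \<psi>"
    and eq: "\<And>\<tau>. \<tau> \<in> {0..1} \<Longrightarrow> \<tau> \<notin> P \<Longrightarrow> Lag N e L (X \<tau>) (g \<tau>) = \<psi> \<tau>"
  shows "D0 N e L y x \<le> ereal (set_lebesgue_integral lborel {0..1} \<psi>)"
proof -
  let ?F = "\<lambda>\<tau>. Lag N e L (X \<tau>) (g \<tau>)"
  define \<phi> where "\<phi> \<tau> = \<psi> \<tau> + (\<Sum>p\<in>P. indicator {p} \<tau> * (?F p - \<psi> p))" for \<tau>
  have Feq: "?F \<tau> = \<phi> \<tau>" if t: "\<tau> \<in> {0..1}" for \<tau>
  proof (cases "\<tau> \<in> P")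
    case True
    have "(\<Sum>p\<in>P. indicator {p} \<tau> * (?F p - \<psi> p)) = indicator {\<tau>} \<tau> * (?F \<tau> - \<psi> \<tau>) + (\<Sum>p\<in>P-{\<tau>}. indicator {p} \<tau> * (?F p - \<psi> p))"
      using True P by (intro sum.remove) auto
    also have "(\<Sum>p\<in>P-{\<tau>}. indicator {p} \<tau> * (?F p - \<psi> p)) = 0"
      by (intro sum.neutral) (auto simp: indicator_def)
    finally show ?thesis unfolding \<phi>_def by simp
  next
    case False
    then have "(\<Sum>p\<in>P. indicator {p} \<tau> * (?F p - \<psi> p)) = 0" by (intro sum.neutral) (auto simp: indicator_def)
    then show ?thesis unfolding \<phi>_def using eq[OF t False] by simp
  qed
  have fp: "emeasure lborel ({0..1} \<inter> {p}) < \<infinity>" for p :: real by (rule fin_sub_Icc[of _ 0 1]) auto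
  have ip: "set_integrable lborel {0..1} (\<lambda>\<tau>. indicator {p} \<tau> * c)" for p c :: real
    by (rule set_int_ind_real(1)[OF _ _ fp]) auto
  have ip0: "set_lebesgue_integral lborel {0..1} (\<lambda>\<tau>. indicator {p} \<tau> * c) = 0" for p c :: real
  proof -
    have "measure lborel ({0..1} \<inter> {p::real}) = 0"
    proof -
      have "{0..1} \<inter> {p::real} \<in> null_sets lborel" by (rule finite_imp_null_set_lborel) auto
      then show ?thesis by (simp add: measure_def null_setsD1)
    qed
    moreover have "set_lebesgue_integral lborel {0..1} (\<lambda>\<tau>. indicator {p} \<tau> * c) = measure lborel ({0..1} \<inter> {p}) * c"
      by (rule set_int_ind_real(2)[OF _ _ fp[of p]]) simp_all
    ultimately show ?thesis by simp
  qed
  have isum: "set_integrable lborel {0..1} (\<lambda>\<tau>. \<Sum>p\<in>P. indicator {p} \<tau> * (?F p - \<psi> p))"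
    unfolding set_integrable_def scaleR_sum_right
    by (rule Bochner_Integration.integrable_sum) (use ip in \<open>simp add: set_integrable_def\<close>)
  have isum0: "set_lebesgue_integral lborel {0..1} (\<lambda>\<tau>. \<Sum>p\<in>P. indicator {p} \<tau> * (?F p - \<psi> p)) = 0"
  proof -
    have "set_lebesgue_integral lborel {0..1} (\<lambda>\<tau>. \<Sum>p\<in>P. indicator {p} \<tau> * (?F p - \<psi> p))
       = (\<Sum>p\<in>P. set_lebesgue_integral lborel {0..1} (\<lambda>\<tau>. indicator {p} \<tau> * (?F p - \<psi> p)))"
      unfolding set_lebesgue_integral_def scaleR_sum_right
      by (rule Bochner_Integration.integral_sum) (use ip in \<open>simp add: set_integrable_def\<close>)
    also have "\<dots> = 0" by (intro sum.neutral ballI ip0)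
    finally show ?thesis .
  qed
  have i\<phi>: "set_integrable lborel {0..1} \<phi>"
    unfolding \<phi>_def by (rule set_integral_add(1)[OF \<psi>i isum])
  have I\<phi>: "set_lebesgue_integral lborel {0..1} \<phi> = set_lebesgue_integral lborel {0..1} \<psi>"
    unfolding \<phi>_def using set_integral_add(2)[OF \<psi>i isum] isum0 by simp
  have iF: "set_integrable lborel {0..1} ?F"
    using i\<phi> by (rule set_integrable_cong[THEN iffD2, rotated -1]) (use Feq in auto)
  have IF: "set_lebesgue_integral lborel {0..1} ?F = set_lebesgue_integral lborel {0..1} \<phi>"
    by (rule set_lebesgue_integral_cong) (use Feq in auto)
  have "path_cost N e L X g = ereal (set_lebesgue_integral lborel {0..1} \<psi>)"
    unfolding path_cost_def using iF IF I\<phi> by simp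
  moreover have "D0 N e L y x \<le> path_cost N e L X g"
    unfolding D0_def by (rule Inf_lower) (use adm in blast)
  ultimately show ?thesis by simp
qed

end


lemma meas_Icc_lt: "0 \<le> t \<Longrightarrow> 0 \<le> a \<Longrightarrow> measure lborel ({0..t} \<inter> {..<a}) = min t (a::real)"
proof (cases "t < a")
  case True
  assume "0 \<le> t"
  then have "{0..t} \<inter> {..<a} = {0..t}" using True by auto
  then show ?thesis using True \<open>0 \<le> t\<close> by simp
next
  case False
  assume "0 \<le> a"
  then have "{0..t} \<inter> {..<a} = {0..<a}" using False by auto
  then show ?thesis using False \<open>0 \<le> a\<close> by simp
qed

lemma meas_Icc_gt: "0 \<le> t \<Longrightarrow> 0 \<le> b \<Longrightarrow> measure lborel ({0..t} \<inter> {b<..}) = max 0 (t - (b::real))"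
proof (cases "t \<le> b")
  case True
  then have "{0..t} \<inter> {b<..} = {}" by auto
  then show ?thesis using True by simp
next
  case False
  assume t: "0 \<le> t" "0 \<le> b"
  then have "{0..t} \<inter> {b<..} = {b<..t}" by auto
  then show ?thesis using t False by simp
qed

context junc begin

lemma junction_ray_idx: "z \<in> junction N e \<Longrightarrow> z \<noteq> 0 \<Longrightarrow> branch_idx N e z \<in> {1..N} \<and> z \<in> ray e (branch_idx N e z)"
  using junction_ray branch_idx_eq by blast

lemma ray_scale_mem: "k \<in> {1..N} \<Longrightarrow> z \<in> ray e k \<Longrightarrow> c \<ge> 0 \<Longrightarrow> c *\<^sub>R z \<in> ray e k"
  unfolding ray_def by auto

lemma ray_dir: "k \<in> {1..N} \<Longrightarrow> z \<in> ray e k \<Longrightarrow> c *\<^sub>R z \<in> {t *\<^sub>R e k | t. True}"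
  using ray_mem[of k z] by (metis (mono_tags, lifting) mem_Collect_eq scaleR_scaleR)

lemma zero_junction: "0 \<in> junction N e"
  using N1 ray_junction[of 1 0] by auto

lemma junction_path:
  assumes yJ: "y \<in> junction N e" and xJ: "x \<in> junction N e"
    and ab: "0 \<le> a" "a \<le> b" "b \<le> 1"
    and ya: "y = 0 \<Longrightarrow> a = 0" "y \<noteq> 0 \<Longrightarrow> 0 < a"
    and xb: "x = 0 \<Longrightarrow> b = 1" "x \<noteq> 0 \<Longrightarrow> b < 1"
  shows "D0 N e L y x \<le> ereal (a * L (branch_idx N e y) (- (y \<bullet> e (branch_idx N e y)) / a)
      + (b - a) * L0 N L 0 + (1 - b) * L (branch_idx N e x) ((x \<bullet> e (branch_idx N e x)) / (1 - b)))"
proof -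
  define j where "j = branch_idx N e y"
  define i where "i = branch_idx N e x"
  define c1 where "c1 = L j (- (y \<bullet> e j) / a)"
  define c2 where "c2 = L0 N L 0"
  define c3 where "c3 = L i ((x \<bullet> e i) / (1 - b))"
  define v1 where "v1 = (-1/a) *\<^sub>R y"
  define v3 where "v3 = (1/(1-b)) *\<^sub>R x"
  define g where "g \<tau> = indicator {..<a} \<tau> *\<^sub>R v1 + indicator {b<..} \<tau> *\<^sub>R v3" for \<tau> :: real
  define X where "X \<tau> = y + min \<tau> a *\<^sub>R v1 + max 0 (\<tau> - b) *\<^sub>R v3" for \<tau> :: real
  have av1: "a *\<^sub>R v1 = - y"
  proof (cases "y = 0")
    case True then show ?thesis unfolding v1_def by simp
  next
    case False then have "a > 0" using ya by simp
    then show ?thesis unfolding v1_def by simp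
  qed
  have bv3: "(1 - b) *\<^sub>R v3 = x"
  proof (cases "x = 0")
    case True then show ?thesis unfolding v3_def by simp
  next
    case False then have "b < 1" using xb by simp
    then show ?thesis unfolding v3_def by simp
  qed
  have X0: "X 0 = y" unfolding X_def using ab by simp
  have X1: "X 1 = x" unfolding X_def using ab av1 bv3 by simp
  have fin: "emeasure lborel (S \<inter> A) < \<infinity>" if "S \<in> sets borel" "A \<in> sets borel" "S \<subseteq> {0..1}" for S A :: "real set"
    by (rule fin_sub_Icc[of _ 0 1]) (use that in auto)
  have gi: "set_integrable lborel S g" and gI: "set_lebesgue_integral lborel S g = measure lborel (S \<inter> {..<a}) *\<^sub>R v1 + measure lborel (S \<inter> {b<..}) *\<^sub>R v3"
    if S: "S \<in> sets borel" "S \<subseteq> {0..1}" for S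
  proof -
    have i1: "set_integrable lborel S (\<lambda>\<tau>. indicator {..<a} \<tau> *\<^sub>R v1)"
      by (rule set_int_ind_const(1)[OF S(1) _ fin[OF S(1) _ S(2)]]) auto
    have i3: "set_integrable lborel S (\<lambda>\<tau>. indicator {b<..} \<tau> *\<^sub>R v3)"
      by (rule set_int_ind_const(1)[OF S(1) _ fin[OF S(1) _ S(2)]]) auto
    show "set_integrable lborel S g" unfolding g_def by (rule set_integral_add(1)[OF i1 i3])
    have "set_lebesgue_integral lborel S g = set_lebesgue_integral lborel S (\<lambda>\<tau>. indicator {..<a} \<tau> *\<^sub>R v1)
        + set_lebesgue_integral lborel S (\<lambda>\<tau>. indicator {b<..} \<tau> *\<^sub>R v3)"
      unfolding g_def by (rule set_integral_add(2)[OF i1 i3])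
    also have "set_lebesgue_integral lborel S (\<lambda>\<tau>. indicator {..<a} \<tau> *\<^sub>R v1) = measure lborel (S \<inter> {..<a}) *\<^sub>R v1"
      by (rule set_int_ind_const(2)[OF S(1) _ fin[OF S(1) _ S(2)]]) auto
    also have "set_lebesgue_integral lborel S (\<lambda>\<tau>. indicator {b<..} \<tau> *\<^sub>R v3) = measure lborel (S \<inter> {b<..}) *\<^sub>R v3"
      by (rule set_int_ind_const(2)[OF S(1) _ fin[OF S(1) _ S(2)]]) auto
    finally show "set_lebesgue_integral lborel S g = measure lborel (S \<inter> {..<a}) *\<^sub>R v1 + measure lborel (S \<inter> {b<..}) *\<^sub>R v3" .
  qed
  define P where "P = {0, a, b, 1::real}"
  have cases3: "(\<tau> < a \<and> y \<noteq> 0) \<or> (a < \<tau> \<and> \<tau> < b) \<or> (b < \<tau> \<and> x \<noteq> 0)"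
    if t: "\<tau> \<in> {0..1}" "\<tau> \<notin> P" for \<tau>
  proof -
    have "\<tau> \<noteq> a" "\<tau> \<noteq> b" "\<tau> \<noteq> 0" "\<tau> \<noteq> 1" using t(2) unfolding P_def by auto
    moreover have "\<tau> < a \<Longrightarrow> y \<noteq> 0" using ya(1) t(1) \<open>\<tau> \<noteq> 0\<close> by force
    moreover have "b < \<tau> \<Longrightarrow> x \<noteq> 0" using xb(1) t(1) by force
    ultimately show ?thesis by linarith
  qed
  have pt1: "X \<tau> = (1 - \<tau>/a) *\<^sub>R y \<and> g \<tau> = v1" if "\<tau> < a" "0 \<le> \<tau>" "y \<noteq> 0" for \<tau>
  proof -
    have a0: "a > 0" using ya that by simp
    have "max 0 (\<tau> - b) = 0" using that ab by simp
    moreover have "min \<tau> a = \<tau>" using that by simp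
    ultimately have "X \<tau> = y + \<tau> *\<^sub>R v1" unfolding X_def by simp
    also have "\<dots> = (1 - \<tau>/a) *\<^sub>R y" unfolding v1_def using a0 by (simp add: algebra_simps)
    finally show ?thesis unfolding g_def using that ab by simp
  qed
  have pt2: "X \<tau> = 0 \<and> g \<tau> = 0" if "a < \<tau>" "\<tau> < b" for \<tau>
  proof -
    have "max 0 (\<tau> - b) = 0" "min \<tau> a = a" using that by simp_all
    then have "X \<tau> = 0" unfolding X_def using av1 by simp
    moreover have "g \<tau> = 0" unfolding g_def using that by simp
    ultimately show ?thesis by simp
  qed
  have pt3: "X \<tau> = ((\<tau> - b)/(1 - b)) *\<^sub>R x \<and> g \<tau> = v3" if "b < \<tau>" "x \<noteq> 0" for \<tau>
  proof -
    have b1: "b < 1" using xb that by simp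
    have "max 0 (\<tau> - b) = \<tau> - b" "min \<tau> a = a" using that ab by simp_all
    then have "X \<tau> = (\<tau> - b) *\<^sub>R v3" unfolding X_def using av1 by simp
    then have "X \<tau> = ((\<tau> - b)/(1 - b)) *\<^sub>R x" unfolding v3_def by simp
    then show ?thesis unfolding g_def using that ab by simp
  qed
  have adm: "admissible N e y x X g"
    unfolding admissible_def
  proof (intro conjI)
    show "set_integrable lborel {0..1} g" by (rule gi) auto
    show "X 0 = y" "X 1 = x" by (rule X0, rule X1)
    show "\<forall>t\<in>{0..1}. X t = X 0 + set_lebesgue_integral lborel {0..t} g"
    proof
      fix t :: real assume t: "t \<in> {0..1}"
      have "set_lebesgue_integral lborel {0..t} g = min t a *\<^sub>R v1 + max 0 (t - b) *\<^sub>R v3"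
        using gI[of "{0..t}"] t meas_Icc_lt[of t a] meas_Icc_gt[of t b] ab by auto
      then show "X t = X 0 + set_lebesgue_integral lborel {0..t} g" unfolding X0 by (simp add: X_def)
    qed
    show "AE \<tau> in lborel. \<tau> \<in> {0..1} \<longrightarrow> X \<tau> \<in> junction N e \<and> g \<tau> \<in> adm_dir N e (X \<tau>)"
    proof -
      have "AE \<tau> in lborel. \<tau> \<notin> P"
        by (rule AE_not_in, rule finite_imp_null_set_lborel) (simp add: P_def)
      then show ?thesis
      proof eventually_elim
        fix \<tau> assume nP: "\<tau> \<notin> P"
        show "\<tau> \<in> {0..1} \<longrightarrow> X \<tau> \<in> junction N e \<and> g \<tau> \<in> adm_dir N e (X \<tau>)"
        proof
          assume t: "\<tau> \<in> {0..1}"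
          from cases3[OF t nP] show "X \<tau> \<in> junction N e \<and> g \<tau> \<in> adm_dir N e (X \<tau>)"
          proof (elim disjE conjE)
            assume h: "\<tau> < a" "y \<noteq> 0"
            have a0: "a > 0" using ya h by simp
            have c: "1 - \<tau>/a > 0" using h a0 t by (simp add: field_simps)
            have yj: "j \<in> {1..N}" "y \<in> ray e j" using junction_ray_idx[OF yJ h(2)] unfolding j_def by auto
            have Xe: "X \<tau> = (1 - \<tau>/a) *\<^sub>R y" "g \<tau> = v1" using pt1[OF h(1) _ h(2)] t by auto
            have Xr: "X \<tau> \<in> ray e j" unfolding Xe using ray_scale_mem[OF yj, of "1 - \<tau>/a"] c by simp
            have Xn: "X \<tau> \<noteq> 0" unfolding Xe using c h by simp
            have bj: "branch_idx N e (X \<tau>) = j" by (rule branch_idx_eq[OF yj(1) Xr Xn])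
            have ad: "adm_dir N e (X \<tau>) = {t *\<^sub>R e j | t. True}" using Xn bj by (simp add: adm_dir_def)
            have "g \<tau> \<in> {t *\<^sub>R e j | t. True}" using ray_dir[OF yj, of "-1/a"] Xe(2) unfolding v1_def by simp
            then show ?thesis using ray_junction[OF yj(1) Xr] ad by simp
          next
            assume h: "a < \<tau>" "\<tau> < b"
            then show ?thesis using pt2[OF h] zero_junction unfolding adm_dir_def by simp
          next
            assume h: "b < \<tau>" "x \<noteq> 0"
            have b1: "b < 1" using xb h by simp
            have c: "(\<tau> - b)/(1 - b) > 0" using h b1 by simp
            have xi: "i \<in> {1..N}" "x \<in> ray e i" using junction_ray_idx[OF xJ h(2)] unfolding i_def by auto
            have Xe: "X \<tau> = ((\<tau> - b)/(1 - b)) *\<^sub>R x" "g \<tau> = v3" using pt3[OF h] by auto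
            have Xr: "X \<tau> \<in> ray e i" unfolding Xe using ray_scale_mem[OF xi, of "(\<tau> - b)/(1 - b)"] c by simp
            have Xn: "X \<tau> \<noteq> 0" unfolding Xe using c h b1 by simp
            have bi: "branch_idx N e (X \<tau>) = i" by (rule branch_idx_eq[OF xi(1) Xr Xn])
            have ad: "adm_dir N e (X \<tau>) = {t *\<^sub>R e i | t. True}" using Xn bi by (simp add: adm_dir_def)
            have "g \<tau> \<in> {t *\<^sub>R e i | t. True}" using ray_dir[OF xi, of "1/(1-b)"] Xe(2) unfolding v3_def by simp
            then show ?thesis using ray_junction[OF xi(1) Xr] ad by simp
          qed
        qed
      qed
    qed
  qed
  define \<psi> where "\<psi> \<tau> = indicator {0<..<a} \<tau> * c1 + indicator {a<..<b} \<tau> * c2 + indicator {b<..<1} \<tau> * c3" for \<tau> :: real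
  have f01: "emeasure lborel ({0..1} \<inter> A) < \<infinity>" if "A \<in> sets borel" for A :: "real set"
    by (rule fin[OF _ that]) auto
  have i1: "set_integrable lborel {0..1} (\<lambda>\<tau>. indicator {0<..<a} \<tau> * c1)"
    by (rule set_int_ind_real(1)[OF _ _ f01]) auto
  have i2: "set_integrable lborel {0..1} (\<lambda>\<tau>. indicator {a<..<b} \<tau> * c2)"
    by (rule set_int_ind_real(1)[OF _ _ f01]) auto
  have i3: "set_integrable lborel {0..1} (\<lambda>\<tau>. indicator {b<..<1} \<tau> * c3)"
    by (rule set_int_ind_real(1)[OF _ _ f01]) auto
  have i12: "set_integrable lborel {0..1} (\<lambda>\<tau>. indicator {0<..<a} \<tau> * c1 + indicator {a<..<b} \<tau> * c2)"
    by (rule set_integral_add(1)[OF i1 i2])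
  have \<psi>i: "set_integrable lborel {0..1} \<psi>" unfolding \<psi>_def by (rule set_integral_add(1)[OF i12 i3])
  have "set_lebesgue_integral lborel {0..1} \<psi> =
      set_lebesgue_integral lborel {0..1} (\<lambda>\<tau>. indicator {0<..<a} \<tau> * c1)
    + set_lebesgue_integral lborel {0..1} (\<lambda>\<tau>. indicator {a<..<b} \<tau> * c2)
    + set_lebesgue_integral lborel {0..1} (\<lambda>\<tau>. indicator {b<..<1} \<tau> * c3)"
    unfolding \<psi>_def set_integral_add(2)[OF i12 i3] set_integral_add(2)[OF i1 i2] ..
  also have "set_lebesgue_integral lborel {0..1} (\<lambda>\<tau>. indicator {0<..<a} \<tau> * c1) = a * c1"
  proof -
    have "{0..1} \<inter> {0<..<a} = {0<..<a}" using ab by auto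
    then show ?thesis using set_int_ind_real(2)[OF _ _ f01, of "{0<..<a}" c1] ab by simp
  qed
  also have "set_lebesgue_integral lborel {0..1} (\<lambda>\<tau>. indicator {a<..<b} \<tau> * c2) = (b - a) * c2"
  proof -
    have "{0..1} \<inter> {a<..<b} = {a<..<b}" using ab by auto
    then show ?thesis using set_int_ind_real(2)[OF _ _ f01, of "{a<..<b}" c2] ab by simp
  qed
  also have "set_lebesgue_integral lborel {0..1} (\<lambda>\<tau>. indicator {b<..<1} \<tau> * c3) = (1 - b) * c3"
  proof -
    have "{0..1} \<inter> {b<..<1} = {b<..<1}" using ab by auto
    then show ?thesis using set_int_ind_real(2)[OF _ _ f01, of "{b<..<1}" c3] ab by simp
  qed
  finally have I\<psi>: "set_lebesgue_integral lborel {0..1} \<psi> = a * c1 + (b - a) * c2 + (1 - b) * c3" .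
  have eqF: "Lag N e L (X \<tau>) (g \<tau>) = \<psi> \<tau>" if t: "\<tau> \<in> {0..1}" "\<tau> \<notin> P" for \<tau>
  proof -
    from cases3[OF t] show ?thesis
    proof (elim disjE conjE)
      assume h: "\<tau> < a" "y \<noteq> 0"
      have a0: "a > 0" using ya h by simp
      have c: "1 - \<tau>/a > 0" using h a0 t by (simp add: field_simps)
      have yj: "j \<in> {1..N}" "y \<in> ray e j" using junction_ray_idx[OF yJ h(2)] unfolding j_def by auto
      have Xe: "X \<tau> = (1 - \<tau>/a) *\<^sub>R y" "g \<tau> = v1" using pt1[OF h(1) _ h(2)] t by auto
      have Xr: "X \<tau> \<in> ray e j" unfolding Xe using ray_scale_mem[OF yj, of "1 - \<tau>/a"] c by simp
      have Xn: "X \<tau> \<noteq> 0" unfolding Xe using c h by simp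
      have "Lag N e L (X \<tau>) (g \<tau>) = L j (v1 \<bullet> e j)" using Lag_ray[OF yj(1) Xr Xn] Xe by simp
      also have "\<dots> = c1" unfolding c1_def v1_def by simp
      finally show ?thesis unfolding \<psi>_def using h t ab \<open>\<tau> \<notin> P\<close> unfolding P_def by auto
    next
      assume h: "a < \<tau>" "\<tau> < b"
      have "Lag N e L (X \<tau>) (g \<tau>) = c2" using pt2[OF h] unfolding c2_def by (simp add: Lag_zero)
      then show ?thesis unfolding \<psi>_def using h by auto
    next
      assume h: "b < \<tau>" "x \<noteq> 0"
      have b1: "b < 1" using xb h by simp
      have c: "(\<tau> - b)/(1 - b) > 0" using h b1 by simp
      have xi: "i \<in> {1..N}" "x \<in> ray e i" using junction_ray_idx[OF xJ h(2)] unfolding i_def by auto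
      have Xe: "X \<tau> = ((\<tau> - b)/(1 - b)) *\<^sub>R x" "g \<tau> = v3" using pt3[OF h] by auto
      have Xr: "X \<tau> \<in> ray e i" unfolding Xe using ray_scale_mem[OF xi, of "(\<tau> - b)/(1 - b)"] c by simp
      have Xn: "X \<tau> \<noteq> 0" unfolding Xe using c h b1 by simp
      have "Lag N e L (X \<tau>) (g \<tau>) = L i (v3 \<bullet> e i)" using Lag_ray[OF xi(1) Xr Xn] Xe by simp
      also have "\<dots> = c3" unfolding c3_def v3_def by simp
      finally show ?thesis unfolding \<psi>_def using h t ab \<open>\<tau> \<notin> P\<close> unfolding P_def by auto
    qed
  qed
  have "D0 N e L y x \<le> ereal (set_lebesgue_integral lborel {0..1} \<psi>)"
  proof -
    have finP: "finite P" by (simp add: P_def)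
    show ?thesis by (rule D0_le_path[OF adm finP \<psi>i eqF])
  qed
  then show ?thesis unfolding I\<psi> c1_def c2_def c3_def j_def i_def .
qed

end


context junc begin

lemma straight_path:
  assumes k: "k \<in> {1..N}" and yk: "y \<in> ray e k" and xk: "x \<in> ray e k" and nz: "\<not> (y = 0 \<and> x = 0)"
  shows "D0 N e L y x \<le> ereal (L k (x \<bullet> e k - y \<bullet> e k))"
proof -
  define yk' where "yk' = y \<bullet> e k"
  define xk' where "xk' = x \<bullet> e k"
  have yr: "y = yk' *\<^sub>R e k" "yk' \<ge> 0" using ray_mem[OF k] yk unfolding yk'_def by auto
  have xr: "x = xk' *\<^sub>R e k" "xk' \<ge> 0" using ray_mem[OF k] xk unfolding xk'_def by auto
  have ek: "e k \<noteq> 0" using unit'[OF k] by auto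
  define X where "X \<tau> = y + \<tau> *\<^sub>R (x - y)" for \<tau> :: real
  define g where "g \<tau> = x - y" for \<tau> :: real
  have ic: "set_integrable lborel S g" if "S \<in> sets borel" "S \<subseteq> {0..1}" for S
  proof -
    have f: "emeasure lborel (S \<inter> UNIV) < \<infinity>" by (rule fin_sub_Icc[of _ 0 1]) (use that in auto)
    have "set_integrable lborel S (\<lambda>\<tau>. indicator UNIV \<tau> *\<^sub>R (x - y))"
      by (rule set_int_ind_const(1)[OF that(1) _ f]) simp
    then show ?thesis unfolding g_def by simp
  qed
  have iI: "set_lebesgue_integral lborel {0..t} g = t *\<^sub>R (x - y)" if "0 \<le> t" "t \<le> 1" for t
  proof -
    have "set_lebesgue_integral lborel {0..t} (\<lambda>\<tau>. indicator UNIV \<tau> *\<^sub>R (x - y)) = measure lborel ({0..t} \<inter> UNIV) *\<^sub>R (x - y)"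
      by (rule set_int_ind_const(2)) (use that in \<open>auto intro!: fin_sub_Icc[of _ 0 1]\<close>)
    then show ?thesis unfolding g_def using that by simp
  qed
  have pt: "X \<tau> \<in> ray e k \<and> X \<tau> \<noteq> 0" if t: "0 < \<tau>" "\<tau> < 1" for \<tau>
  proof -
    have Xe: "X \<tau> = ((1 - \<tau>) * yk' + \<tau> * xk') *\<^sub>R e k"
      unfolding X_def by (subst yr(1), subst xr(1), subst yr(1), simp add: algebra_simps)
    have pos: "(1 - \<tau>) * yk' + \<tau> * xk' > 0"
    proof (cases "y = 0")
      case True
      then have "x \<noteq> 0" using nz by simp
      then have "xk' \<noteq> 0" using xr by auto
      then have "xk' > 0" using xr by simp
      moreover have "(1 - \<tau>) * yk' \<ge> 0" using yr t by simp
      ultimately show ?thesis using t by (simp add: add_nonneg_pos)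
    next
      case False
      then have "yk' \<noteq> 0" using yr by auto
      then have "yk' > 0" using yr by simp
      moreover have "\<tau> * xk' \<ge> 0" using xr t by simp
      ultimately show ?thesis using t by (simp add: add_pos_nonneg)
    qed
    show ?thesis unfolding Xe using scale_ray[OF k, of "(1 - \<tau>) * yk' + \<tau> * xk'"] pos ek by simp
  qed
  have gdir: "g \<tau> = (xk' - yk') *\<^sub>R e k" for \<tau> unfolding g_def by (subst xr(1), subst yr(1)) (simp add: algebra_simps)
  have adm: "admissible N e y x X g"
    unfolding admissible_def
  proof (intro conjI)
    show "set_integrable lborel {0..1} g" by (rule ic) auto
    show "X 0 = y" "X 1 = x" unfolding X_def by simp_all
    show "\<forall>t\<in>{0..1}. X t = X 0 + set_lebesgue_integral lborel {0..t} g"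
      using iI unfolding X_def by simp
    show "AE \<tau> in lborel. \<tau> \<in> {0..1} \<longrightarrow> X \<tau> \<in> junction N e \<and> g \<tau> \<in> adm_dir N e (X \<tau>)"
      using AE_lborel_singleton[of 0] AE_lborel_singleton[of 1]
    proof eventually_elim
      fix \<tau> :: real assume h: "\<tau> \<noteq> 0" "\<tau> \<noteq> 1"
      show "\<tau> \<in> {0..1} \<longrightarrow> X \<tau> \<in> junction N e \<and> g \<tau> \<in> adm_dir N e (X \<tau>)"
      proof
        assume "\<tau> \<in> {0..1}"
        then have t: "0 < \<tau>" "\<tau> < 1" using h by auto
        have r: "X \<tau> \<in> ray e k" "X \<tau> \<noteq> 0" using pt[OF t] by auto
        have bk: "branch_idx N e (X \<tau>) = k" by (rule branch_idx_eq[OF k r])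
        have ad: "adm_dir N e (X \<tau>) = {t *\<^sub>R e k | t. True}" using r bk by (simp add: adm_dir_def)
        show "X \<tau> \<in> junction N e \<and> g \<tau> \<in> adm_dir N e (X \<tau>)"
          using ray_junction[OF k r(1)] ad gdir by auto
      qed
    qed
  qed
  define c where "c = L k (x \<bullet> e k - y \<bullet> e k)"
  have f1: "emeasure lborel ({0..1::real} \<inter> UNIV) < \<infinity>" by (rule fin_sub_Icc[of _ 0 1]) auto
  have \<psi>i: "set_integrable lborel {0..1} (\<lambda>\<tau>::real. indicator UNIV \<tau> * c)"
    by (rule set_int_ind_real(1)[OF _ _ f1]) auto
  have \<psi>I: "set_lebesgue_integral lborel {0..1} (\<lambda>\<tau>::real. indicator UNIV \<tau> * c) = c"
  proof -
    have "set_lebesgue_integral lborel {0..1} (\<lambda>\<tau>::real. indicator UNIV \<tau> * c) = measure lborel ({0..1::real} \<inter> UNIV) * c"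
      by (rule set_int_ind_real(2)[OF _ _ f1]) auto
    then show ?thesis by simp
  qed
  have eq: "Lag N e L (X \<tau>) (g \<tau>) = indicator UNIV \<tau> * c" if "\<tau> \<in> {0..1}" "\<tau> \<notin> {0,1}" for \<tau>
  proof -
    have t: "0 < \<tau>" "\<tau> < 1" using that by auto
    have r: "X \<tau> \<in> ray e k" "X \<tau> \<noteq> 0" using pt[OF t] by auto
    show ?thesis using Lag_ray[OF k r] unfolding c_def g_def by (simp add: inner_diff_left)
  qed
  have "D0 N e L y x \<le> ereal (set_lebesgue_integral lborel {0..1} (\<lambda>\<tau>::real. indicator UNIV \<tau> * c))"
  proof -
    have finP: "finite {0,1::real}" by simp
    show ?thesis by (rule D0_le_path[OF adm finP \<psi>i eq])
  qed
  then show ?thesis using \<psi>I unfolding c_def by simp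
qed

theorem main:
  assumes xJ: "x \<in> junction N e" and yJ: "y \<in> junction N e"
  shows "D0 N e L y x = min (Dstraight N e L y x) (Djunction N e L y x)"
proof (rule antisym)
  show "min (Dstraight N e L y x) (Djunction N e L y x) \<le> D0 N e L y x"
    unfolding D0_def
  proof (rule Inf_greatest)
    fix z assume "z \<in> {path_cost N e L X g |X g. admissible N e y x X g}"
    then obtain X g where z: "z = path_cost N e L X g" and adm: "admissible N e y x X g" by blast
    show "min (Dstraight N e L y x) (Djunction N e L y x) \<le> z"
    proof (cases "set_integrable lborel {0..1} (\<lambda>\<tau>. Lag N e L (X \<tau>) (g \<tau>))")
      case True
      then show ?thesis unfolding z path_cost_def using lower[OF adm True] by simp
    next
      case False
      then show ?thesis unfolding z path_cost_def by simp
    qed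
  qed
next
  have s: "D0 N e L y x \<le> Dstraight N e L y x"
  proof (cases "y = 0 \<and> x = 0")
    case True
    have "D0 N e L y x \<le> ereal (0 * L (branch_idx N e y) (- (y \<bullet> e (branch_idx N e y)) / 0)
      + (1 - 0) * L0 N L 0 + (1 - 1) * L (branch_idx N e x) ((x \<bullet> e (branch_idx N e x)) / (1 - 1)))"
      by (rule junction_path[OF yJ xJ]) (use True in auto)
    then show ?thesis using True unfolding Dstraight_def by simp
  next
    case nz: False
    show ?thesis
    proof (cases "\<exists>i\<in>{1..N}. y \<in> ray e i \<and> x \<in> ray e i")
      case True
      define i where "i = (SOME i. i \<in> {1..N} \<and> y \<in> ray e i \<and> x \<in> ray e i)"
      have i: "i \<in> {1..N} \<and> y \<in> ray e i \<and> x \<in> ray e i" unfolding i_def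
        by (rule someI_ex) (use True in blast)
      have "Dstraight N e L y x = ereal (L i (x \<bullet> e i - y \<bullet> e i))"
        unfolding Dstraight_def if_not_P[OF nz] if_P[OF True] by (simp only: i_def Let_def)
      moreover have "D0 N e L y x \<le> ereal (L i (x \<bullet> e i - y \<bullet> e i))"
        using straight_path[of i y x] i nz by blast
      ultimately show ?thesis by simp
    next
      case False
      have "Dstraight N e L y x = \<infinity>"
        unfolding Dstraight_def if_not_P[OF nz] if_not_P[OF False] ..
      then show ?thesis by simp
    qed
  qed
  have j: "D0 N e L y x \<le> Djunction N e L y x"
    unfolding Djunction_def
  proof (rule Inf_greatest)
    fix z assume "z \<in> {E1 N e L \<tau>1 y + E2 N e L \<tau>2 x |\<tau>1 \<tau>2. 0 \<le> \<tau>1 \<and> \<tau>1 \<le> \<tau>2 \<and> \<tau>2 \<le> 1}"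
    then obtain \<tau>1 \<tau>2 where z: "z = E1 N e L \<tau>1 y + E2 N e L \<tau>2 x" and t: "0 \<le> \<tau>1" "\<tau>1 \<le> \<tau>2" "\<tau>2 \<le> 1"
      by blast
    have E2ninf: "E2 N e L \<tau>2 x \<noteq> - \<infinity>" unfolding E2_def Let_def by auto
    have E1ninf: "E1 N e L \<tau>1 y \<noteq> - \<infinity>" unfolding E1_def Let_def by auto
    show "D0 N e L y x \<le> z"
    proof (cases "y \<noteq> 0 \<and> \<tau>1 = 0")
      case True
      then have "E1 N e L \<tau>1 y = \<infinity>" unfolding E1_def by simp
      then have "z = \<infinity>" using z E2ninf by simp
      then show ?thesis by simp
    next
      case c1: False
      show ?thesis
      proof (cases "x \<noteq> 0 \<and> \<tau>2 = 1")
        case True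
        then have "E2 N e L \<tau>2 x = \<infinity>" unfolding E2_def by simp
        then have "z = \<infinity>" using z E1ninf by simp
        then show ?thesis by simp
      next
        case c2: False
        define a where "a = (if y = 0 then 0 else \<tau>1)"
        define b where "b = (if x = 0 then 1 else \<tau>2)"
        have ab: "0 \<le> a" "a \<le> b" "b \<le> 1" using t unfolding a_def b_def by auto
        have ya: "y = 0 \<Longrightarrow> a = 0" "y \<noteq> 0 \<Longrightarrow> 0 < a" using c1 t unfolding a_def by auto
        have xb: "x = 0 \<Longrightarrow> b = 1" "x \<noteq> 0 \<Longrightarrow> b < 1" using c2 t unfolding b_def by auto
        let ?j = "branch_idx N e y" and ?i = "branch_idx N e x"
        have D: "D0 N e L y x \<le> ereal (a * L ?j (- (y \<bullet> e ?j) / a)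
          + (b - a) * L0 N L 0 + (1 - b) * L ?i ((x \<bullet> e ?i) / (1 - b)))"
          by (rule junction_path[OF yJ xJ ab ya xb])
        have "ereal (a * L ?j (- (y \<bullet> e ?j) / a) + (b - a) * L0 N L 0 + (1 - b) * L ?i ((x \<bullet> e ?i) / (1 - b))) = z"
        proof (cases "y = 0")
          case y0: True
          show ?thesis
          proof (cases "x = 0")
            case True
            then show ?thesis unfolding z a_def b_def using y0 by (simp add: E1_def E2_def)
          next
            case False
            then show ?thesis unfolding z a_def b_def using y0 c2 by (simp add: E1_def E2_def Let_def algebra_simps)
          qed
        next
          case y0: False
          show ?thesis
          proof (cases "x = 0")
            case True
            then show ?thesis unfolding z a_def b_def using y0 c1 by (simp add: E1_def E2_def Let_def algebra_simps)
          next
            case False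
            then show ?thesis unfolding z a_def b_def using y0 c1 c2 by (simp add: E1_def E2_def Let_def algebra_simps)
          qed
        qed
        then show ?thesis using D by simp
      qed
    qed
  qed
  show "D0 N e L y x \<le> min (Dstraight N e L y x) (Djunction N e L y x)" using s j by simp
qed

end

theorem mainTheorem15:
  fixes N :: nat and e :: "nat \<Rightarrow> real^2" and L :: "nat \<Rightarrow> real \<Rightarrow> real"
    and \<gamma> :: real and x y :: "real^2"
  assumes "N \<ge> 1"
    and "inj_on e {1..N}"
    and "\<forall>i\<in>{1..N}. norm (e i) = 1"
    and "\<gamma> > 0"
    and "\<forall>i\<in>{1..N}. \<exists>L1 L2. continuous_on UNIV L2 \<and>
           (\<forall>p. (L i has_real_derivative L1 p) (at p) \<and>
                (L1 has_real_derivative L2 p) (at p) \<and> L2 p \<ge> \<gamma>)"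
    and "x \<in> junction N e" and "y \<in> junction N e"
  shows "D0 N e L y x = min (Dstraight N e L y x) (Djunction N e L y x)"
proof -
  interpret junc N e L \<gamma> using assms(1-5) by unfold_locales
  show ?thesis using main assms(6,7) by blast
qed


end
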